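(* Let $ABC$ be a triangle with incenter $I$ and Bevan point $B_e$. Let $A_0, B_0, C_0$ be the points where the $A$-, $B$-, $C$-excircles touch $BC, CA, AB$ respectively, and let $O_0$ be the circumcenter of $A_0B_0C_0$. Let $A', B', C'$ be the feet of the perpendiculars from $B_e$ to $AI, BI, CI$, and let $H'$ be the orthocenter of $A'B'C'$. Then $B_e$, $H'$, $O_0$ are collinear.
   Context: The Bevan point $B_e$ of $ABC$ is the circumcenter of the excentral triangle (the triangle formed by the three excenters of $ABC$). *)

theory Defs
  imports "HOL-Analysis.Analysis"
begin

type_synonym point = "real^2"

definition circumcenter :: "point \<Rightarrow> point \<Rightarrow> point \<Rightarrow> point" where
  "circumcenter P Q R = (THE X. dist X P = dist X Q \<and> dist X Q = dist X R)"

definition orthocenter :: "point \<Rightarrow> point \<Rightarrow> point \<Rightarrow> point" where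
  "orthocenter P Q R = (THE H. (H - P) \<bullet> (Q - R) = 0 \<and> (H - Q) \<bullet> (P - R) = 0
                               \<and> (H - R) \<bullet> (P - Q) = 0)"

definition foot :: "point \<Rightarrow> point \<Rightarrow> point \<Rightarrow> point" where
  "foot P X Y = X + (((P - X) \<bullet> (Y - X)) / (norm (Y - X))^2) *\<^sub>R (Y - X)"

text \<open>Incenter and excenters via the standard barycentric coordinates
  (a : b : c) and (-a : b : c) etc., with a = |BC|, b = |CA|, c = |AB|.\<close>
definition incenter :: "point \<Rightarrow> point \<Rightarrow> point \<Rightarrow> point" where
  "incenter A B C = (let a = dist B C; b = dist C A; c = dist A B in
     (1 / (a + b + c)) *\<^sub>R (a *\<^sub>R A + b *\<^sub>R B + c *\<^sub>R C))"

definition excenter :: "point \<Rightarrow> point \<Rightarrow> point \<Rightarrow> point" where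
  "excenter A B C = (let a = dist B C; b = dist C A; c = dist A B in
     (1 / (- a + b + c)) *\<^sub>R ((- a) *\<^sub>R A + b *\<^sub>R B + c *\<^sub>R C))"

definition bevan_point :: "point \<Rightarrow> point \<Rightarrow> point \<Rightarrow> point" where
  "bevan_point A B C =
     circumcenter (excenter A B C) (excenter B C A) (excenter C A B)"

end

theory Submission
  imports Defs
begin


definition pt :: "point \<Rightarrow> point \<Rightarrow> point \<Rightarrow> real \<Rightarrow> real \<Rightarrow> point" where
  "pt A p q x y = A + x *\<^sub>R p + y *\<^sub>R q"

definition bil :: "real \<Rightarrow> real \<Rightarrow> real \<Rightarrow> real \<Rightarrow> real \<Rightarrow> real \<Rightarrow> real \<Rightarrow> real" where
  "bil a b c x y u v = x * u * c^2 + (x * v + y * u) * ((b^2 + c^2 - a^2) / 2) + y * v * b^2"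

lemma pt_diff: "pt A p q x y - pt A p q u v = (x-u) *\<^sub>R p + (y-v) *\<^sub>R q"
  by (simp add: pt_def algebra_simps)

lemma inner_bil:
  assumes "norm p = c" "norm q = b" "norm (q - p) = a"
  shows "(x *\<^sub>R p + y *\<^sub>R q) \<bullet> (u *\<^sub>R p + v *\<^sub>R q) = bil a b c x y u v"
proof -
  have pp: "p \<bullet> p = c^2" using assms power2_norm_eq_inner[of p] by simp
  have qq: "q \<bullet> q = b^2" using assms power2_norm_eq_inner[of q] by simp
  have "a^2 = (q - p) \<bullet> (q - p)" using assms power2_norm_eq_inner[of "q-p"] by simp
  also have "\<dots> = q \<bullet> q - 2 * (p \<bullet> q) + p \<bullet> p"
    by (simp add: inner_diff_left inner_diff_right inner_commute)
  finally have pq: "p \<bullet> q = (b^2+c^2-a^2)/2" using pp qq by simp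
  have "(x *\<^sub>R p + y *\<^sub>R q) \<bullet> (u *\<^sub>R p + v *\<^sub>R q) = x * u * (p \<bullet> p) + (x * v + y * u) * (p \<bullet> q) + y * v * (q \<bullet> q)"
    by (simp add: inner_add_left inner_add_right inner_commute algebra_simps)
  thus ?thesis by (simp add: pp qq pq bil_def)
qed

lemma dist_pt:
  assumes "norm p = c" "norm q = b" "norm (q - p) = a"
  shows "dist (pt A p q x y) (pt A p q u v) = sqrt (bil a b c (x-u) (y-v) (x-u) (y-v))"
  using inner_bil[OF assms] by (simp add: dist_norm pt_diff norm_eq_sqrt_inner)

lemma lin2:
  fixes u v al be ga de :: real
  assumes "al * u + be * v = 0" "ga * u + de * v = 0" "al*de - be*ga \<noteq> 0"
  shows "u = 0 \<and> v = 0"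
proof -
  have "u * (al*de - be*ga) = de * (al * u + be * v) - be * (ga * u + de * v)" by algebra
  hence u: "u * (al*de - be*ga) = 0" using assms by simp
  have "v * (al*de - be*ga) = al * (ga * u + de * v) - ga * (al * u + be * v)" by algebra
  hence v: "v * (al*de - be*ga) = 0" using assms by simp
  show ?thesis using u v assms(3) by simp
qed

lemma perp_zero:
  fixes w p q :: point
  assumes "w \<bullet> p = 0" "w \<bullet> q = 0" "p$1*q$2 - p$2*q$1 \<noteq> 0"
  shows "w = 0"
proof -
  have "w$1*p$1 + w$2*p$2 = 0" "w$1*q$1 + w$2*q$2 = 0"
    using assms by (simp_all add: inner_vec_def sum_2)
  hence "w$1 = 0 \<and> w$2 = 0"
    using lin2[of "p$1" "w$1" "p$2" "w$2" "q$1" "q$2"] assms(3) by (simp add: mult.commute)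
  thus ?thesis by (simp add: vec_eq_iff forall_2)
qed

lemma perp_pt_zero:
  fixes w p q :: point
  assumes "w \<bullet> ((x1 *\<^sub>R p + y1 *\<^sub>R q)) = 0" "w \<bullet> ((x2 *\<^sub>R p + y2 *\<^sub>R q)) = 0"
    "x1*y2 - y1*x2 \<noteq> 0" "p$1*q$2 - p$2*q$1 \<noteq> 0"
  shows "w = 0"
proof -
  have "x1*(w \<bullet> p) + y1*(w \<bullet> q) = 0" "x2*(w \<bullet> p) + y2*(w \<bullet> q) = 0"
    using assms(1,2) by (simp_all add: inner_add_right)
  hence "w \<bullet> p = 0 \<and> w \<bullet> q = 0" using lin2 assms(3) by blast
  thus ?thesis using perp_zero assms(4) by blast
qed

lemma circ_pt:
  assumes n: "norm p = c" "norm q = b" "norm (q - p) = a"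
  and D: "p$1*q$2 - p$2*q$1 \<noteq> 0"
  and det: "(x2-x1)*(y3-y1) - (y2-y1)*(x3-x1) \<noteq> 0"
  and e1: "bil a b c (x-x1) (y-y1) (x-x1) (y-y1) = bil a b c (x-x2) (y-y2) (x-x2) (y-y2)"
  and e2: "bil a b c (x-x2) (y-y2) (x-x2) (y-y2) = bil a b c (x-x3) (y-y3) (x-x3) (y-y3)"
  shows "circumcenter (pt A p q x1 y1) (pt A p q x2 y2) (pt A p q x3 y3) = pt A p q x y"
  unfolding circumcenter_def
proof (rule the_equality)
  let ?X = "pt A p q x y"
  show "dist ?X (pt A p q x1 y1) = dist ?X (pt A p q x2 y2) \<and> dist ?X (pt A p q x2 y2) = dist ?X (pt A p q x3 y3)"
    using e1 e2 by (simp add: dist_pt[OF n])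
  fix Z assume Z: "dist Z (pt A p q x1 y1) = dist Z (pt A p q x2 y2) \<and> dist Z (pt A p q x2 y2) = dist Z (pt A p q x3 y3)"
  define w where "w = Z - ?X"
  have Zw: "Z = ?X + w" by (simp add: w_def)
  have sq: "\<And>P. (dist Z P)^2 = (dist ?X P)^2 + 2 * (w \<bullet> (?X - P)) + w \<bullet> w"
    by (simp add: Zw dist_norm power2_norm_eq_inner inner_add_left inner_add_right inner_diff_left inner_diff_right inner_commute algebra_simps)
  have X1: "dist ?X (pt A p q x1 y1) = dist ?X (pt A p q x2 y2)" "dist ?X (pt A p q x2 y2) = dist ?X (pt A p q x3 y3)"
    using e1 e2 by (simp_all add: dist_pt[OF n])
  have "(dist Z (pt A p q x1 y1))^2 = (dist Z (pt A p q x2 y2))^2" using Z by simp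
  hence "w \<bullet> (?X - pt A p q x1 y1) = w \<bullet> (?X - pt A p q x2 y2)" using X1 sq by simp
  hence h1: "w \<bullet> (pt A p q x2 y2 - pt A p q x1 y1) = 0" by (simp add: inner_diff_right)
  have "(dist Z (pt A p q x2 y2))^2 = (dist Z (pt A p q x3 y3))^2" using Z by simp
  hence "w \<bullet> (?X - pt A p q x2 y2) = w \<bullet> (?X - pt A p q x3 y3)" using X1 sq by simp
  hence h2: "w \<bullet> (pt A p q x3 y3 - pt A p q x1 y1) = 0" using h1 by (simp add: inner_diff_right)
  have "w = 0"
    using perp_pt_zero[of w "x2-x1" p "y2-y1" q "x3-x1" "y3-y1"] h1 h2 det D by (simp add: pt_diff)
  thus "Z = ?X" by (simp add: Zw)
qed

lemma orth_pt:
  assumes n: "norm p = c" "norm q = b" "norm (q - p) = a"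
  and D: "p$1*q$2 - p$2*q$1 \<noteq> 0"
  and det: "(x2-x1)*(y3-y1) - (y2-y1)*(x3-x1) \<noteq> 0"
  and o1: "bil a b c (x-x1) (y-y1) (x2-x3) (y2-y3) = 0"
  and o2: "bil a b c (x-x2) (y-y2) (x1-x3) (y1-y3) = 0"
  and o3: "bil a b c (x-x3) (y-y3) (x1-x2) (y1-y2) = 0"
  shows "orthocenter (pt A p q x1 y1) (pt A p q x2 y2) (pt A p q x3 y3) = pt A p q x y"
  unfolding orthocenter_def
proof (rule the_equality)
  let ?X = "pt A p q x y"
  let ?P1 = "pt A p q x1 y1" and ?P2 = "pt A p q x2 y2" and ?P3 = "pt A p q x3 y3"
  show "(?X - ?P1) \<bullet> (?P2 - ?P3) = 0 \<and> (?X - ?P2) \<bullet> (?P1 - ?P3) = 0 \<and> (?X - ?P3) \<bullet> (?P1 - ?P2) = 0"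
    using o1 o2 o3 by (simp add: pt_diff inner_bil[OF n])
  fix Z assume Z: "(Z - ?P1) \<bullet> (?P2 - ?P3) = 0 \<and> (Z - ?P2) \<bullet> (?P1 - ?P3) = 0 \<and> (Z - ?P3) \<bullet> (?P1 - ?P2) = 0"
  define w where "w = Z - ?X"
  have Zw: "Z = ?X + w" by (simp add: w_def)
  have X1: "(?X - ?P1) \<bullet> (?P2 - ?P3) = 0" "(?X - ?P2) \<bullet> (?P1 - ?P3) = 0"
    using o1 o2 by (simp_all add: pt_diff inner_bil[OF n])
  have e: "Z - ?P1 = (?X - ?P1) + w" "Z - ?P2 = (?X - ?P2) + w" by (simp_all add: Zw)
  from Z have z1: "(Z - ?P1) \<bullet> (?P2 - ?P3) = 0" and z2: "(Z - ?P2) \<bullet> (?P1 - ?P3) = 0" by blast+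
  have h1: "w \<bullet> (?P2 - ?P3) = 0" using z1 X1(1) unfolding e(1) inner_add_left by simp
  have h2: "w \<bullet> (?P1 - ?P3) = 0" using z2 X1(2) unfolding e(2) inner_add_left by simp
  note h = h1 h2
  have dd: "(x2-x3)*(y1-y3) - (y2-y3)*(x1-x3) = -((x2-x1)*(y3-y1) - (y2-y1)*(x3-x1))" by algebra
  have "w = 0"
    using perp_pt_zero[of w "x2-x3" p "y2-y3" q "x1-x3" "y1-y3"] h det D dd by (simp add: pt_diff)
  thus "Z = ?X" by (simp add: Zw)
qed

lemma pt_line: "pt A p q u v + t *\<^sub>R (pt A p q u' v' - pt A p q u v) = A + (u + t * (u'-u)) *\<^sub>R p + (v + t * (v'-v)) *\<^sub>R q"
  unfolding pt_diff pt_def by (simp add: algebra_simps)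

lemma foot_pt:
  assumes n: "norm p = c" "norm q = b" "norm (q - p) = a"
  and X: "X = u + (bil a b c (x-u) (y-v) (u'-u) (v'-v) / bil a b c (u'-u) (v'-v) (u'-u) (v'-v)) * (u'-u)"
  and Y: "Y = v + (bil a b c (x-u) (y-v) (u'-u) (v'-v) / bil a b c (u'-u) (v'-v) (u'-u) (v'-v)) * (v'-v)"
  shows "foot (pt A p q x y) (pt A p q u v) (pt A p q u' v') = pt A p q X Y"
proof -
  let ?P = "pt A p q x y" and ?U = "pt A p q u v" and ?V = "pt A p q u' v'"
  let ?t = "bil a b c (x-u) (y-v) (u'-u) (v'-v) / bil a b c (u'-u) (v'-v) (u'-u) (v'-v)"
  have 2: "norm (?V - ?U) ^ 2 = bil a b c (u'-u) (v'-v) (u'-u) (v'-v)"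
    by (simp only: power2_norm_eq_inner pt_diff inner_bil[OF n])
  have 1: "(?P - ?U) \<bullet> (?V - ?U) = bil a b c (x-u) (y-v) (u'-u) (v'-v)"
    by (simp only: pt_diff inner_bil[OF n])
  have "foot ?P ?U ?V = ?U + ?t *\<^sub>R (?V - ?U)"
    unfolding foot_def 1 2 ..
  also have "\<dots> = A + (u + ?t * (u'-u)) *\<^sub>R p + (v + ?t * (v'-v)) *\<^sub>R q"
    by (rule pt_line)
  finally show ?thesis unfolding X Y pt_def .
qed

lemma col0:
  fixes p q :: point
  assumes "d1*e2 - e1*d2 = 0"
  shows "collinear {0, d1 *\<^sub>R p + e1 *\<^sub>R q, d2 *\<^sub>R p + e2 *\<^sub>R q}"
proof (cases "d1 = 0 \<and> e1 = 0")
  case True thus ?thesis by (simp add: collinear_lemma)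
next
  case False
  show ?thesis
  proof (cases "d1 = 0")
    case True
    hence e1: "e1 \<noteq> 0" using False by simp
    have "d2 = (e2/e1) * d1" using True e1 assms by simp
    hence "d2 *\<^sub>R p + e2 *\<^sub>R q = (e2/e1) *\<^sub>R (d1 *\<^sub>R p + e1 *\<^sub>R q)" using e1
      by (simp add: algebra_simps)
    thus ?thesis unfolding collinear_lemma by blast
  next
    case d1: False
    have "d2 = (d2/d1) * d1" "e2 = (d2/d1) * e1" using d1 assms by (simp_all add: field_simps)
    hence "d2 *\<^sub>R p + e2 *\<^sub>R q = (d2/d1) *\<^sub>R (d1 *\<^sub>R p + e1 *\<^sub>R q)"
      by (metis scaleR_add_right scaleR_scaleR)
    thus ?thesis unfolding collinear_lemma by blast
  qed
qed

lemma col_pt: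
  assumes "(x2-x1)*(y3-y1) - (y2-y1)*(x3-x1) = 0"
  shows "collinear {pt A p q x1 y1, pt A p q x2 y2, pt A p q x3 y3}"
proof -
  have "{pt A p q x1 y1, pt A p q x2 y2, pt A p q x3 y3} = {pt A p q x2 y2, pt A p q x1 y1, pt A p q x3 y3}"
    by auto
  moreover have "collinear {pt A p q x2 y2, pt A p q x1 y1, pt A p q x3 y3}"
    apply (subst collinear_3)
     apply simp
    using col0[OF assms, of p q] by (simp add: pt_diff)
  ultimately show ?thesis by simp
qed

lemma noncol_D:
  fixes A B C :: point
  assumes "\<not> collinear {A, B, C}"
  shows "(B-A)$1*(C-A)$2 - (B-A)$2*(C-A)$1 \<noteq> 0"
proof
  assume h: "(B-A)$1*(C-A)$2 - (B-A)$2*(C-A)$1 = 0"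
  define p where "p = B - A"
  define q where "q = C - A"
  have h': "p$1*q$2 - p$2*q$1 = 0" using h by (simp add: p_def q_def)
  have "collinear {0, p, q}"
  proof (cases "p = 0")
    case True thus ?thesis by (simp add: collinear_lemma)
  next
    case False
    hence "p$1 \<noteq> 0 \<or> p$2 \<noteq> 0" by (simp add: vec_eq_iff forall_2)
    thus ?thesis
    proof
      assume p1: "p$1 \<noteq> 0"
      have "q = (q$1/p$1) *\<^sub>R p"
        using p1 h' by (simp add: vec_eq_iff forall_2 field_simps; simp add: algebra_simps)
      thus ?thesis unfolding collinear_lemma by blast
    next
      assume p2: "p$2 \<noteq> 0"
      have "q = (q$2/p$2) *\<^sub>R p"
        using p2 h' by (simp add: vec_eq_iff forall_2 field_simps; simp add: algebra_simps)
      thus ?thesis unfolding collinear_lemma by blast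
    qed
  qed
  hence "collinear {B, A, C}" by (subst collinear_3) (simp_all add: p_def q_def)
  moreover have "{B, A, C} = {A, B, C}" by auto
  ultimately show False using assms by simp
qed

lemma bary:
  fixes A B C :: point
  assumes "al + be + ga \<noteq> 0"
  shows "(1/(al+be+ga)) *\<^sub>R (al *\<^sub>R A + be *\<^sub>R B + ga *\<^sub>R C) = pt A (B-A) (C-A) (be/(al+be+ga)) (ga/(al+be+ga))"
proof -
  have "pt A (B-A) (C-A) (be/(al+be+ga)) (ga/(al+be+ga)) = (1/(al+be+ga)) *\<^sub>R ((al+be+ga) *\<^sub>R A + be *\<^sub>R (B - A) + ga *\<^sub>R (C - A))"
    using assms by (simp add: pt_def scaleR_add_right scaleR_scaleR)
  also have "(al+be+ga) *\<^sub>R A + be *\<^sub>R (B - A) + ga *\<^sub>R (C - A) = al *\<^sub>R A + be *\<^sub>R B + ga *\<^sub>R C"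
    by (simp add: algebra_simps)
  finally show ?thesis by simp
qed

lemma bary2:
  fixes A B C :: point
  assumes "al + be + ga \<noteq> 0"
  shows "(1/(be+ga+al)) *\<^sub>R (be *\<^sub>R B + ga *\<^sub>R C + al *\<^sub>R A) = pt A (B-A) (C-A) (be/(al+be+ga)) (ga/(al+be+ga))"
  using bary[OF assms, of A B C] by (simp add: ac_simps)

lemma bary3:
  fixes A B C :: point
  assumes "al + be + ga \<noteq> 0"
  shows "(1/(ga+al+be)) *\<^sub>R (ga *\<^sub>R C + al *\<^sub>R A + be *\<^sub>R B) = pt A (B-A) (C-A) (be/(al+be+ga)) (ga/(al+be+ga))"
  using bary[OF assms, of A B C] by (simp add: ac_simps)

lemma bil_sq: "bil a b c u v u v - bil a b c u' v' u' v' = bil a b c (u+u') (v+v') (u-u') (v-v')"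
  unfolding bil_def by algebra

lemma bil_div:
  assumes "d \<noteq> 0" "e \<noteq> 0"
  shows "bil a b c (u/d) (v/d) (u'/e) (v'/e) = bil a b c u v u' v' / (d*e)"
  using assms unfolding bil_def by (simp add: field_simps)

lemma frac_diff: "(d1::real) \<noteq> 0 \<Longrightarrow> d2 \<noteq> 0 \<Longrightarrow> n2/d2 - n1/d1 = (n2*d1 - n1*d2)/(d1*d2)"
  by (simp add: field_simps)

lemma frac_2x: "(d::real) \<noteq> 0 \<Longrightarrow> d1 \<noteq> 0 \<Longrightarrow> d2 \<noteq> 0 \<Longrightarrow>
   2*(n/d) - n1/d1 - n2/d2 = (2*n*d1*d2 - n1*d*d2 - n2*d*d1)/(d*d1*d2)"
  by (simp add: field_simps)

lemma det_frac:
  fixes d1 :: real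
  assumes "d1 \<noteq> 0" "d2 \<noteq> 0" "d3 \<noteq> 0"
  shows "(n2x/d2 - n1x/d1)*(n3y/d3 - n1y/d1) - (n2y/d2 - n1y/d1)*(n3x/d3 - n1x/d1)
    = ((n2x*d1 - n1x*d2)*(n3y*d1 - n1y*d3) - (n2y*d1 - n1y*d2)*(n3x*d1 - n1x*d3)) / (d1*d1*d2*d3)"
  using assms by (simp add: field_simps)

lemma circ_eq_frac:
  fixes d :: real
  assumes nz: "d \<noteq> 0" "d1 \<noteq> 0" "d2 \<noteq> 0"
  and e: "bil a b c (2*nx*d1*d2 - n1x*d*d2 - n2x*d*d1) (2*ny*d1*d2 - n1y*d*d2 - n2y*d*d1) (n2x*d1 - n1x*d2) (n2y*d1 - n1y*d2) = 0"
  shows "bil a b c (nx/d - n1x/d1) (ny/d - n1y/d1) (nx/d - n1x/d1) (ny/d - n1y/d1) =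
         bil a b c (nx/d - n2x/d2) (ny/d - n2y/d2) (nx/d - n2x/d2) (ny/d - n2y/d2)"
proof -
  have f1: "(nx/d - n1x/d1) + (nx/d - n2x/d2) = (2*nx*d1*d2 - n1x*d*d2 - n2x*d*d1)/(d*d1*d2)"
    using nz by (simp add: field_simps)
  have f2: "(ny/d - n1y/d1) + (ny/d - n2y/d2) = (2*ny*d1*d2 - n1y*d*d2 - n2y*d*d1)/(d*d1*d2)"
    using nz by (simp add: field_simps)
  have f3: "(nx/d - n1x/d1) - (nx/d - n2x/d2) = (n2x*d1 - n1x*d2)/(d1*d2)"
    using nz by (simp add: field_simps)
  have f4: "(ny/d - n1y/d1) - (ny/d - n2y/d2) = (n2y*d1 - n1y*d2)/(d1*d2)"
    using nz by (simp add: field_simps)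
  have "bil a b c (nx/d - n1x/d1) (ny/d - n1y/d1) (nx/d - n1x/d1) (ny/d - n1y/d1) -
         bil a b c (nx/d - n2x/d2) (ny/d - n2y/d2) (nx/d - n2x/d2) (ny/d - n2y/d2)
     = bil a b c ((nx/d - n1x/d1) + (nx/d - n2x/d2)) ((ny/d - n1y/d1) + (ny/d - n2y/d2))
          ((nx/d - n1x/d1) - (nx/d - n2x/d2)) ((ny/d - n1y/d1) - (ny/d - n2y/d2))"
    by (rule bil_sq)
  also have "\<dots> = bil a b c ((2*nx*d1*d2 - n1x*d*d2 - n2x*d*d1)/(d*d1*d2)) ((2*ny*d1*d2 - n1y*d*d2 - n2y*d*d1)/(d*d1*d2))
       ((n2x*d1 - n1x*d2)/(d1*d2)) ((n2y*d1 - n1y*d2)/(d1*d2))"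
    by (simp only: f1 f2 f3 f4)
  also have "\<dots> = 0" using nz by (simp add: bil_div e)
  finally show ?thesis by simp
qed

lemma circ_frac:
  assumes n: "norm p = c" "norm q = b" "norm (q - p) = a"
  and D: "p$1*q$2 - p$2*q$1 \<noteq> 0"
  and nz: "d \<noteq> 0" "d1 \<noteq> 0" "d2 \<noteq> 0" "d3 \<noteq> 0"
  and det: "(n2x*d1 - n1x*d2)*(n3y*d1 - n1y*d3) - (n2y*d1 - n1y*d2)*(n3x*d1 - n1x*d3) \<noteq> 0"
  and e1: "bil a b c (2*nx*d1*d2 - n1x*d*d2 - n2x*d*d1) (2*ny*d1*d2 - n1y*d*d2 - n2y*d*d1) (n2x*d1 - n1x*d2) (n2y*d1 - n1y*d2) = 0"
  and e2: "bil a b c (2*nx*d2*d3 - n2x*d*d3 - n3x*d*d2) (2*ny*d2*d3 - n2y*d*d3 - n3y*d*d2) (n3x*d2 - n2x*d3) (n3y*d2 - n2y*d3) = 0"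
  shows "circumcenter (pt A p q (n1x/d1) (n1y/d1)) (pt A p q (n2x/d2) (n2y/d2)) (pt A p q (n3x/d3) (n3y/d3)) = pt A p q (nx/d) (ny/d)"
proof (rule circ_pt[OF n D])
  show "(n2x/d2 - n1x/d1)*(n3y/d3 - n1y/d1) - (n2y/d2 - n1y/d1)*(n3x/d3 - n1x/d1) \<noteq> 0"
    using det nz by (simp add: det_frac)
  show "bil a b c (nx/d - n1x/d1) (ny/d - n1y/d1) (nx/d - n1x/d1) (ny/d - n1y/d1) =
         bil a b c (nx/d - n2x/d2) (ny/d - n2y/d2) (nx/d - n2x/d2) (ny/d - n2y/d2)"
    by (rule circ_eq_frac[OF nz(1,2,3) e1])
  show "bil a b c (nx/d - n2x/d2) (ny/d - n2y/d2) (nx/d - n2x/d2) (ny/d - n2y/d2) =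
         bil a b c (nx/d - n3x/d3) (ny/d - n3y/d3) (nx/d - n3x/d3) (ny/d - n3y/d3)"
    by (rule circ_eq_frac[OF nz(1,3,4) e2])
qed

lemma orth_eq_frac:
  fixes d :: real
  assumes nz: "d \<noteq> 0" "d1 \<noteq> 0" "d2 \<noteq> 0" "d3 \<noteq> 0"
  and e: "bil a b c (nx*d1 - n1x*d) (ny*d1 - n1y*d) (n2x*d3 - n3x*d2) (n2y*d3 - n3y*d2) = 0"
  shows "bil a b c (nx/d - n1x/d1) (ny/d - n1y/d1) (n2x/d2 - n3x/d3) (n2y/d2 - n3y/d3) = 0"
proof -
  have f1: "nx/d - n1x/d1 = (nx*d1 - n1x*d)/(d*d1)" "ny/d - n1y/d1 = (ny*d1 - n1y*d)/(d*d1)"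
    using nz by (simp_all add: field_simps)
  have f2: "n2x/d2 - n3x/d3 = (n2x*d3 - n3x*d2)/(d2*d3)" "n2y/d2 - n3y/d3 = (n2y*d3 - n3y*d2)/(d2*d3)"
    using nz by (simp_all add: field_simps)
  show ?thesis unfolding f1 f2 using nz by (simp add: bil_div e)
qed

lemma orth_frac:
  assumes n: "norm p = c" "norm q = b" "norm (q - p) = a"
  and D: "p$1*q$2 - p$2*q$1 \<noteq> 0"
  and nz: "d \<noteq> 0" "d1 \<noteq> 0" "d2 \<noteq> 0" "d3 \<noteq> 0"
  and det: "(n2x*d1 - n1x*d2)*(n3y*d1 - n1y*d3) - (n2y*d1 - n1y*d2)*(n3x*d1 - n1x*d3) \<noteq> 0"
  and o1: "bil a b c (nx*d1 - n1x*d) (ny*d1 - n1y*d) (n2x*d3 - n3x*d2) (n2y*d3 - n3y*d2) = 0"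
  and o2: "bil a b c (nx*d2 - n2x*d) (ny*d2 - n2y*d) (n1x*d3 - n3x*d1) (n1y*d3 - n3y*d1) = 0"
  and o3: "bil a b c (nx*d3 - n3x*d) (ny*d3 - n3y*d) (n1x*d2 - n2x*d1) (n1y*d2 - n2y*d1) = 0"
  shows "orthocenter (pt A p q (n1x/d1) (n1y/d1)) (pt A p q (n2x/d2) (n2y/d2)) (pt A p q (n3x/d3) (n3y/d3)) = pt A p q (nx/d) (ny/d)"
proof (rule orth_pt[OF n D])
  show "(n2x/d2 - n1x/d1)*(n3y/d3 - n1y/d1) - (n2y/d2 - n1y/d1)*(n3x/d3 - n1x/d1) \<noteq> 0"
    using det nz by (simp add: det_frac)
  show "bil a b c (nx/d - n1x/d1) (ny/d - n1y/d1) (n2x/d2 - n3x/d3) (n2y/d2 - n3y/d3) = 0"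
    by (rule orth_eq_frac[OF nz(1,2,3,4) o1])
  show "bil a b c (nx/d - n2x/d2) (ny/d - n2y/d2) (n1x/d1 - n3x/d3) (n1y/d1 - n3y/d3) = 0"
    by (rule orth_eq_frac[OF nz(1,3,2,4) o2])
  show "bil a b c (nx/d - n3x/d3) (ny/d - n3y/d3) (n1x/d1 - n2x/d2) (n1y/d1 - n2y/d2) = 0"
    by (rule orth_eq_frac[OF nz(1,4,2,3) o3])
qed

lemma col_frac:
  assumes nz: "d1 \<noteq> 0" "d2 \<noteq> 0" "d3 \<noteq> 0"
  and det: "(n2x*d1 - n1x*d2)*(n3y*d1 - n1y*d3) - (n2y*d1 - n1y*d2)*(n3x*d1 - n1x*d3) = 0"
  shows "collinear {pt A p q (n1x/d1) (n1y/d1), pt A p q (n2x/d2) (n2y/d2), pt A p q (n3x/d3) (n3y/d3)}"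
  by (rule col_pt) (use det nz in \<open>simp add: det_frac\<close>)

lemma foot_aux:
  fixes nX dX :: real
  assumes "dp \<noteq> 0" "du \<noteq> 0" "dv \<noteq> 0" "dX \<noteq> 0" "B2 \<noteq> 0"
   "nX * (du * dp * B2) = dX * (nux * dp * B2 + B1 * (nvx*du - nux*dv))"
  shows "nX/dX = nux/du + (B1 * dv / (dp * B2)) * (nvx/dv - nux/du)"
proof -
  have "nux/du + (B1 * dv / (dp * B2)) * (nvx/dv - nux/du) = (nux * dp * B2 + B1 * (nvx*du - nux*dv)) / (du * dp * B2)"
    using assms(1-5) by (simp add: field_simps)
  also have "\<dots> = nX/dX" using assms by (simp add: frac_eq_eq)
  finally show ?thesis by simp
qed

lemma foot_frac:
  assumes n: "norm p = c" "norm q = b" "norm (q - p) = a"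
  and nz: "dp \<noteq> 0" "du \<noteq> 0" "dv \<noteq> 0" "dX \<noteq> 0"
  and b2: "bil a b c (nvx*du - nux*dv) (nvy*du - nuy*dv) (nvx*du - nux*dv) (nvy*du - nuy*dv) \<noteq> 0"
  and ex: "nX * (du * dp * bil a b c (nvx*du - nux*dv) (nvy*du - nuy*dv) (nvx*du - nux*dv) (nvy*du - nuy*dv))
     = dX * (nux * dp * bil a b c (nvx*du - nux*dv) (nvy*du - nuy*dv) (nvx*du - nux*dv) (nvy*du - nuy*dv)
        + bil a b c (npx*du - nux*dp) (npy*du - nuy*dp) (nvx*du - nux*dv) (nvy*du - nuy*dv) * (nvx*du - nux*dv))"
  and ey: "nY * (du * dp * bil a b c (nvx*du - nux*dv) (nvy*du - nuy*dv) (nvx*du - nux*dv) (nvy*du - nuy*dv))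
     = dX * (nuy * dp * bil a b c (nvx*du - nux*dv) (nvy*du - nuy*dv) (nvx*du - nux*dv) (nvy*du - nuy*dv)
        + bil a b c (npx*du - nux*dp) (npy*du - nuy*dp) (nvx*du - nux*dv) (nvy*du - nuy*dv) * (nvy*du - nuy*dv))"
  shows "foot (pt A p q (npx/dp) (npy/dp)) (pt A p q (nux/du) (nuy/du)) (pt A p q (nvx/dv) (nvy/dv)) = pt A p q (nX/dX) (nY/dX)"
proof (rule foot_pt[OF n])
  let ?B2 = "bil a b c (nvx*du - nux*dv) (nvy*du - nuy*dv) (nvx*du - nux*dv) (nvy*du - nuy*dv)"
  let ?B1 = "bil a b c (npx*du - nux*dp) (npy*du - nuy*dp) (nvx*du - nux*dv) (nvy*du - nuy*dv)"
  have t: "bil a b c (npx/dp - nux/du) (npy/dp - nuy/du) (nvx/dv - nux/du) (nvy/dv - nuy/du) /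
        bil a b c (nvx/dv - nux/du) (nvy/dv - nuy/du) (nvx/dv - nux/du) (nvy/dv - nuy/du)
       = (?B1 / (dp*du*(du*dv))) / (?B2 / (du*dv*(du*dv)))"
    using nz by (simp add: frac_diff bil_div mult.commute)
  also have "\<dots> = ?B1 * dv / (dp * ?B2)" using nz b2 by (simp add: field_simps)
  finally have t: "bil a b c (npx/dp - nux/du) (npy/dp - nuy/du) (nvx/dv - nux/du) (nvy/dv - nuy/du) /
        bil a b c (nvx/dv - nux/du) (nvy/dv - nuy/du) (nvx/dv - nux/du) (nvy/dv - nuy/du) = ?B1 * dv / (dp * ?B2)" .
  show "nX/dX = nux/du + (bil a b c (npx/dp - nux/du) (npy/dp - nuy/du) (nvx/dv - nux/du) (nvy/dv - nuy/du) /
        bil a b c (nvx/dv - nux/du) (nvy/dv - nuy/du) (nvx/dv - nux/du) (nvy/dv - nuy/du)) * (nvx/dv - nux/du)"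
    unfolding t using foot_aux[OF nz(1-4) b2 ex] .
  show "nY/dX = nuy/du + (bil a b c (npx/dp - nux/du) (npy/dp - nuy/du) (nvx/dv - nux/du) (nvy/dv - nuy/du) /
        bil a b c (nvx/dv - nux/du) (nvy/dv - nuy/du) (nvx/dv - nux/du) (nvy/dv - nuy/du)) * (nvy/dv - nuy/du)"
    unfolding t using foot_aux[OF nz(1-4) b2 ey] .
qed

definition sG :: "real \<Rightarrow> real \<Rightarrow> real \<Rightarrow> real" where
  "sG x y z = x^3 - x^2*y - x^2*z - x*y^2 + 3*x*y*z - x*z^2 + y^3 - y^2*z - y*z^2 + z^3"

lemma sG_sym: "sG x y z = sG y x z" "sG x y z = sG x z y"
  unfolding sG_def by algebra+

lemma schur_ord:
  fixes x y z :: real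
  assumes "x \<ge> y" "y \<ge> z" "z > 0" "sG x y z = 0"
  shows "x = y \<and> y = z"
proof -
  have eq: "sG x y z = (x-y)^2*(x+y-z) + z*((x-z)*(y-z))" unfolding sG_def by algebra
  have t1: "(x-y)^2*(x+y-z) \<ge> 0" using assms by simp
  have t2: "z*((x-z)*(y-z)) \<ge> 0" using assms by simp
  have z1: "(x-y)^2*(x+y-z) = 0" using eq t1 t2 assms(4) by linarith
  have z2: "z*((x-z)*(y-z)) = 0" using eq t1 t2 assms(4) by linarith
  have "x + y - z > 0" using assms by linarith
  hence "x = y" using z1 by simp
  moreover have "x = z \<or> y = z" using z2 assms(3) by simp
  ultimately show ?thesis by auto
qed

lemma schur:
  fixes a b c :: real
  assumes "a > 0" "b > 0" "c > 0"
  shows "a^3 - a^2*b - a^2*c - a*b^2 + 3*a*b*c - a*c^2 + b^3 - b^2*c - b*c^2 + c^3 \<noteq> 0 \<or> (a = b \<and> b = c)"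
proof (rule ccontr)
  assume h: "\<not> (a^3 - a^2*b - a^2*c - a*b^2 + 3*a*b*c - a*c^2 + b^3 - b^2*c - b*c^2 + c^3 \<noteq> 0 \<or> (a = b \<and> b = c))"
  hence g: "sG a b c = 0" and ne: "\<not> (a = b \<and> b = c)" by (simp_all add: sG_def)
  have s: "sG a b c = sG a c b" "sG a b c = sG b a c" "sG a b c = sG b c a" "sG a b c = sG c a b" "sG a b c = sG c b a"
    by (metis sG_sym)+
  have "a \<ge> b \<and> b \<ge> c \<or> a \<ge> c \<and> c \<ge> b \<or> b \<ge> a \<and> a \<ge> c \<or> b \<ge> c \<and> c \<ge> a \<or> c \<ge> a \<and> a \<ge> b \<or> c \<ge> b \<and> b \<ge> a"
    by linarith
  thus False
    using ne schur_ord[of a b c] schur_ord[of a c b] schur_ord[of b a c] schur_ord[of b c a]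
      schur_ord[of c a b] schur_ord[of c b a] assms g s by auto
qed

definition bil2 :: "real \<Rightarrow> real \<Rightarrow> real \<Rightarrow> real \<Rightarrow> real \<Rightarrow> real \<Rightarrow> real \<Rightarrow> real" where
  "bil2 a b c x y u v = 2 * x * u * c^2 + (x * v + y * u) * (b^2 + c^2 - a^2) + 2 * y * v * b^2"

lemma bil_2: "bil a b c x y u v = bil2 a b c x y u v / 2"
  unfolding bil_def bil2_def by (simp add: field_simps)

lemma half_eq:
  fixes n :: real
  assumes "n * (d * X) = e * (m * X + Y * w)"
  shows "n * (d * (X/2)) = e * (m * (X/2) + (Y/2) * w)"
proof -
  have "n * (d * (X/2)) = (n * (d * X)) / 2" by simp
  also have "\<dots> = (e * (m * X + Y * w)) / 2" using assms by simp
  also have "\<dots> = e * (m * (X/2) + (Y/2) * w)" by (simp add: field_simps)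
  finally show ?thesis .
qed


theorem proposition4p2:
  fixes A B C I Be A0 B0 C0 O0 A' B' C' H' :: point
  assumes "\<not> collinear {A, B, C}"
      and "I = incenter A B C"
      and "Be = bevan_point A B C"
      and "A0 = foot (excenter A B C) B C"
      and "B0 = foot (excenter B C A) C A"
      and "C0 = foot (excenter C A B) A B"
      and "O0 = circumcenter A0 B0 C0"
      and "A' = foot Be A I"
      and "B' = foot Be B I"
      and "C' = foot Be C I"
      and "H' = orthocenter A' B' C'"
  shows "collinear {Be, H', O0}"
proof -
  define a where "a = dist B C"
  define b where "b = dist C A"
  define c where "c = dist A B"
  define p where "p = B - A"
  define q where "q = C - A"
  have n: "norm p = c" "norm q = b" "norm (q - p) = a"
    unfolding p_def q_def a_def b_def c_def by (simp_all add: dist_norm norm_minus_commute)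
  have D: "p$1*q$2 - p$2*q$1 \<noteq> 0" using noncol_D[OF assms(1)] by (simp add: p_def q_def)
  have ptA: "pt A p q (0/1) (0/1) = A" "pt A p q (1/1) (0/1) = B" "pt A p q (0/1) (1/1) = C"
    by (simp_all add: pt_def p_def q_def)
  have c2: "c^2 = p$1*p$1 + p$2*p$2" using n(1) power2_norm_eq_inner[of p] by (simp add: inner_vec_def sum_2)
  have b2: "b^2 = q$1*q$1 + q$2*q$2" using n(2) power2_norm_eq_inner[of q] by (simp add: inner_vec_def sum_2)
  have a2: "a^2 = (q$1-p$1)*(q$1-p$1) + (q$2-p$2)*(q$2-p$2)" using n(3) power2_norm_eq_inner[of "q-p"] by (simp add: inner_vec_def sum_2)
  have "(a+b+c)*(-a+b+c)*(a-b+c)*(a+b-c) = 2*(a^2)*(b^2) + 2*(b^2)*(c^2) + 2*(c^2)*(a^2) - (a^2)^2 - (b^2)^2 - (c^2)^2"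
    by algebra
  also have "\<dots> = 4*(p$1*q$2 - p$2*q$1)^2" unfolding a2 b2 c2 by algebra
  finally have Kid: "(a+b+c)*(-a+b+c)*(a-b+c)*(a+b-c) = 4*(p$1*q$2 - p$2*q$1)^2" .
  have Kpos: "(a+b+c)*(-a+b+c)*(a-b+c)*(a+b-c) > 0" unfolding Kid using D by simp
  have ge: "a \<ge> 0" "b \<ge> 0" "c \<ge> 0" unfolding a_def b_def c_def by simp_all
  have pos: "a > 0" "b > 0" "c > 0"
  proof -
    { fix x y z :: real assume "x \<ge> 0" "(x+y+z)*(-x+y+z)*(x-y+z)*(x+y-z) > 0"
      have "x \<noteq> 0"
      proof
        assume "x = 0"
        hence "(x+y+z)*(-x+y+z)*(x-y+z)*(x+y-z) = - (((y+z)*(y-z))^2)" by algebra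
        thus False using \<open>(x+y+z)*(-x+y+z)*(x-y+z)*(x+y-z) > 0\<close> by simp
      qed
      hence "x > 0" using \<open>x \<ge> 0\<close> by simp }
    note aux = this
    show "a > 0" using aux[OF ge(1) Kpos] .
    have "(b+c+a)*(-b+c+a)*(b-c+a)*(b+c-a) = (a+b+c)*(-a+b+c)*(a-b+c)*(a+b-c)" by algebra
    thus "b > 0" using aux[OF ge(2), of c a] Kpos by simp
    have "(c+a+b)*(-c+a+b)*(c-a+b)*(c+a-b) = (a+b+c)*(-a+b+c)*(a-b+c)*(a+b-c)" by algebra
    thus "c > 0" using aux[OF ge(3), of a b] Kpos by simp
  qed
  have nz: "a+b+c \<noteq> 0" "-a+b+c \<noteq> 0" "a-b+c \<noteq> 0" "a+b-c \<noteq> 0"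
    using Kpos by auto
  note dnz = pos nz
  have I: "I = pt A p q (b/(a+b+c)) (c/(a+b+c))"
  proof -
    have "incenter A B C = pt A (B-A) (C-A) (b/(a+b+c)) (c/(a+b+c))"
      unfolding incenter_def Let_def a_def[symmetric] b_def[symmetric] c_def[symmetric]
      by (rule bary) (use nz in simp)
    thus ?thesis using assms(2) by (simp add: p_def q_def)
  qed
  have IA: "excenter A B C = pt A p q (b/(-a+b+c)) (c/(-a+b+c))"
  proof -
    have "excenter A B C = pt A (B-A) (C-A) (b/(-a+b+c)) (c/(-a+b+c))"
      unfolding excenter_def Let_def a_def[symmetric] b_def[symmetric] c_def[symmetric]
      by (rule bary) (use nz in simp)
    thus ?thesis by (simp add: p_def q_def)
  qed
  have IB: "excenter B C A = pt A p q ((-b)/(a-b+c)) (c/(a-b+c))"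
  proof -
    have e: "a + -b + c = a-b+c" by simp
    have "excenter B C A = pt A (B-A) (C-A) ((-b)/(a + -b + c)) (c/(a + -b + c))"
      unfolding excenter_def Let_def a_def[symmetric] b_def[symmetric] c_def[symmetric]
      by (rule bary2) (use nz in simp)
    thus ?thesis unfolding e by (simp add: p_def q_def)
  qed
  have IC: "excenter C A B = pt A p q (b/(a+b-c)) ((-c)/(a+b-c))"
  proof -
    have e: "a + b + -c = a+b-c" by simp
    have "excenter C A B = pt A (B-A) (C-A) (b/(a + b + -c)) ((-c)/(a + b + -c))"
      unfolding excenter_def Let_def a_def[symmetric] b_def[symmetric] c_def[symmetric]
      by (rule bary3) (use nz in simp)
    thus ?thesis unfolding e by (simp add: p_def q_def)
  qed

  have BeC_det: "((-b)*(-a+b+c) - b*(a-b+c))*((-c)*(-a+b+c) - c*(a+b-c)) - (c*(-a+b+c) - c*(a-b+c))*(b*(-a+b+c) - b*(a+b-c)) \<noteq> 0"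
  proof -
    have "((-b)*(-a+b+c) - b*(a-b+c))*((-c)*(-a+b+c) - c*(a+b-c)) - (c*(-a+b+c) - c*(a-b+c))*(b*(-a+b+c) - b*(a+b-c)) = 4*a*b*c*(-a+b+c)" by algebra
    thus ?thesis using pos nz  by simp
  qed
  have BeC_e1: "bil a b c (2*(b*(a^3 + a^2*b - a^2*c - a*b^2 + 2*a*b*c - a*c^2 - b^3 - b^2*c + b*c^2 + c^3))*(-a+b+c)*(a-b+c) - b*((a+b+c)*(-a+b+c)*(a-b+c)*(a+b-c))*(a-b+c) - (-b)*((a+b+c)*(-a+b+c)*(a-b+c)*(a+b-c))*(-a+b+c)) (2*(c*(a^3 - a^2*b + a^2*c - a*b^2 + 2*a*b*c - a*c^2 + b^3 + b^2*c - b*c^2 - c^3))*(-a+b+c)*(a-b+c) - c*((a+b+c)*(-a+b+c)*(a-b+c)*(a+b-c))*(a-b+c) - c*((a+b+c)*(-a+b+c)*(a-b+c)*(a+b-c))*(-a+b+c)) ((-b)*(-a+b+c) - b*(a-b+c)) (c*(-a+b+c) - c*(a-b+c)) = 0"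
  proof -
    have h: "bil2 a b c (2*(b*(a^3 + a^2*b - a^2*c - a*b^2 + 2*a*b*c - a*c^2 - b^3 - b^2*c + b*c^2 + c^3))*(-a+b+c)*(a-b+c) - b*((a+b+c)*(-a+b+c)*(a-b+c)*(a+b-c))*(a-b+c) - (-b)*((a+b+c)*(-a+b+c)*(a-b+c)*(a+b-c))*(-a+b+c)) (2*(c*(a^3 - a^2*b + a^2*c - a*b^2 + 2*a*b*c - a*c^2 + b^3 + b^2*c - b*c^2 - c^3))*(-a+b+c)*(a-b+c) - c*((a+b+c)*(-a+b+c)*(a-b+c)*(a+b-c))*(a-b+c) - c*((a+b+c)*(-a+b+c)*(a-b+c)*(a+b-c))*(-a+b+c)) ((-b)*(-a+b+c) - b*(a-b+c)) (c*(-a+b+c) - c*(a-b+c)) = 0" unfolding bil2_def by algebra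
    show ?thesis unfolding bil_2 h by simp
  qed
  have BeC_e2: "bil a b c (2*(b*(a^3 + a^2*b - a^2*c - a*b^2 + 2*a*b*c - a*c^2 - b^3 - b^2*c + b*c^2 + c^3))*(a-b+c)*(a+b-c) - (-b)*((a+b+c)*(-a+b+c)*(a-b+c)*(a+b-c))*(a+b-c) - b*((a+b+c)*(-a+b+c)*(a-b+c)*(a+b-c))*(a-b+c)) (2*(c*(a^3 - a^2*b + a^2*c - a*b^2 + 2*a*b*c - a*c^2 + b^3 + b^2*c - b*c^2 - c^3))*(a-b+c)*(a+b-c) - c*((a+b+c)*(-a+b+c)*(a-b+c)*(a+b-c))*(a+b-c) - (-c)*((a+b+c)*(-a+b+c)*(a-b+c)*(a+b-c))*(a-b+c)) (b*(a-b+c) - (-b)*(a+b-c)) ((-c)*(a-b+c) - c*(a+b-c)) = 0"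
  proof -
    have h: "bil2 a b c (2*(b*(a^3 + a^2*b - a^2*c - a*b^2 + 2*a*b*c - a*c^2 - b^3 - b^2*c + b*c^2 + c^3))*(a-b+c)*(a+b-c) - (-b)*((a+b+c)*(-a+b+c)*(a-b+c)*(a+b-c))*(a+b-c) - b*((a+b+c)*(-a+b+c)*(a-b+c)*(a+b-c))*(a-b+c)) (2*(c*(a^3 - a^2*b + a^2*c - a*b^2 + 2*a*b*c - a*c^2 + b^3 + b^2*c - b*c^2 - c^3))*(a-b+c)*(a+b-c) - c*((a+b+c)*(-a+b+c)*(a-b+c)*(a+b-c))*(a+b-c) - (-c)*((a+b+c)*(-a+b+c)*(a-b+c)*(a+b-c))*(a-b+c)) (b*(a-b+c) - (-b)*(a+b-c)) ((-c)*(a-b+c) - c*(a+b-c)) = 0" unfolding bil2_def by algebra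
    show ?thesis unfolding bil_2 h by simp
  qed
  have BeC: "circumcenter (pt A p q (b/(-a+b+c)) (c/(-a+b+c))) (pt A p q ((-b)/(a-b+c)) (c/(a-b+c))) (pt A p q (b/(a+b-c)) ((-c)/(a+b-c))) = pt A p q ((b*(a^3 + a^2*b - a^2*c - a*b^2 + 2*a*b*c - a*c^2 - b^3 - b^2*c + b*c^2 + c^3))/((a+b+c)*(-a+b+c)*(a-b+c)*(a+b-c))) ((c*(a^3 - a^2*b + a^2*c - a*b^2 + 2*a*b*c - a*c^2 + b^3 + b^2*c - b*c^2 - c^3))/((a+b+c)*(-a+b+c)*(a-b+c)*(a+b-c)))"
    by (rule circ_frac[OF n D _ _ _ _ BeC_det BeC_e1 BeC_e2]) (use dnz in simp)+
  have Be: "Be = pt A p q ((b*(a^3 + a^2*b - a^2*c - a*b^2 + 2*a*b*c - a*c^2 - b^3 - b^2*c + b*c^2 + c^3))/((a+b+c)*(-a+b+c)*(a-b+c)*(a+b-c))) ((c*(a^3 - a^2*b + a^2*c - a*b^2 + 2*a*b*c - a*c^2 + b^3 + b^2*c - b*c^2 - c^3))/((a+b+c)*(-a+b+c)*(a-b+c)*(a+b-c)))"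
    using BeC unfolding assms(3) bevan_point_def IA IB IC by simp
  have A0F_b2: "bil a b c (0*1 - 1*1) (1*1 - 0*1) (0*1 - 1*1) (1*1 - 0*1) \<noteq> 0"
  proof -
    have h: "bil2 a b c (0*1 - 1*1) (1*1 - 0*1) (0*1 - 1*1) (1*1 - 0*1) = 2*(1*a*a)" unfolding bil2_def by algebra
    show ?thesis unfolding bil_2 h using pos nz by simp
  qed
  have A0F_ex: "(a-b+c) * (1 * (-a+b+c) * bil a b c (0*1 - 1*1) (1*1 - 0*1) (0*1 - 1*1) (1*1 - 0*1)) = (2*a) * (1 * (-a+b+c) * bil a b c (0*1 - 1*1) (1*1 - 0*1) (0*1 - 1*1) (1*1 - 0*1) + bil a b c (b*1 - 1*(-a+b+c)) (c*1 - 0*(-a+b+c)) (0*1 - 1*1) (1*1 - 0*1) * (0*1 - 1*1))"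
  proof -
    have h: "(a-b+c) * (1 * (-a+b+c) * bil2 a b c (0*1 - 1*1) (1*1 - 0*1) (0*1 - 1*1) (1*1 - 0*1)) = (2*a) * (1 * (-a+b+c) * bil2 a b c (0*1 - 1*1) (1*1 - 0*1) (0*1 - 1*1) (1*1 - 0*1) + bil2 a b c (b*1 - 1*(-a+b+c)) (c*1 - 0*(-a+b+c)) (0*1 - 1*1) (1*1 - 0*1) * (0*1 - 1*1))" unfolding bil2_def by algebra
    show ?thesis unfolding bil_2 by (rule half_eq[OF h])
  qed
  have A0F_ey: "(a+b-c) * (1 * (-a+b+c) * bil a b c (0*1 - 1*1) (1*1 - 0*1) (0*1 - 1*1) (1*1 - 0*1)) = (2*a) * (0 * (-a+b+c) * bil a b c (0*1 - 1*1) (1*1 - 0*1) (0*1 - 1*1) (1*1 - 0*1) + bil a b c (b*1 - 1*(-a+b+c)) (c*1 - 0*(-a+b+c)) (0*1 - 1*1) (1*1 - 0*1) * (1*1 - 0*1))"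
  proof -
    have h: "(a+b-c) * (1 * (-a+b+c) * bil2 a b c (0*1 - 1*1) (1*1 - 0*1) (0*1 - 1*1) (1*1 - 0*1)) = (2*a) * (0 * (-a+b+c) * bil2 a b c (0*1 - 1*1) (1*1 - 0*1) (0*1 - 1*1) (1*1 - 0*1) + bil2 a b c (b*1 - 1*(-a+b+c)) (c*1 - 0*(-a+b+c)) (0*1 - 1*1) (1*1 - 0*1) * (1*1 - 0*1))" unfolding bil2_def by algebra
    show ?thesis unfolding bil_2 by (rule half_eq[OF h])
  qed
  have A0F: "foot (pt A p q (b/(-a+b+c)) (c/(-a+b+c))) (pt A p q (1/1) (0/1)) (pt A p q (0/1) (1/1)) = pt A p q ((a-b+c)/(2*a)) ((a+b-c)/(2*a))"
    by (rule foot_frac[OF n _ _ _ _ A0F_b2 A0F_ex A0F_ey]) (use dnz in simp)+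
  have B0F_b2: "bil a b c (0*1 - 0*1) (0*1 - 1*1) (0*1 - 0*1) (0*1 - 1*1) \<noteq> 0"
  proof -
    have h: "bil2 a b c (0*1 - 0*1) (0*1 - 1*1) (0*1 - 0*1) (0*1 - 1*1) = 2*(1*b*b)" unfolding bil2_def by algebra
    show ?thesis unfolding bil_2 h using pos nz by simp
  qed
  have B0F_ex: "0 * (1 * (a-b+c) * bil a b c (0*1 - 0*1) (0*1 - 1*1) (0*1 - 0*1) (0*1 - 1*1)) = (2*b) * (0 * (a-b+c) * bil a b c (0*1 - 0*1) (0*1 - 1*1) (0*1 - 0*1) (0*1 - 1*1) + bil a b c ((-b)*1 - 0*(a-b+c)) (c*1 - 1*(a-b+c)) (0*1 - 0*1) (0*1 - 1*1) * (0*1 - 0*1))"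
  proof -
    have h: "0 * (1 * (a-b+c) * bil2 a b c (0*1 - 0*1) (0*1 - 1*1) (0*1 - 0*1) (0*1 - 1*1)) = (2*b) * (0 * (a-b+c) * bil2 a b c (0*1 - 0*1) (0*1 - 1*1) (0*1 - 0*1) (0*1 - 1*1) + bil2 a b c ((-b)*1 - 0*(a-b+c)) (c*1 - 1*(a-b+c)) (0*1 - 0*1) (0*1 - 1*1) * (0*1 - 0*1))" unfolding bil2_def by algebra
    show ?thesis unfolding bil_2 by (rule half_eq[OF h])
  qed
  have B0F_ey: "(a+b-c) * (1 * (a-b+c) * bil a b c (0*1 - 0*1) (0*1 - 1*1) (0*1 - 0*1) (0*1 - 1*1)) = (2*b) * (1 * (a-b+c) * bil a b c (0*1 - 0*1) (0*1 - 1*1) (0*1 - 0*1) (0*1 - 1*1) + bil a b c ((-b)*1 - 0*(a-b+c)) (c*1 - 1*(a-b+c)) (0*1 - 0*1) (0*1 - 1*1) * (0*1 - 1*1))"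
  proof -
    have h: "(a+b-c) * (1 * (a-b+c) * bil2 a b c (0*1 - 0*1) (0*1 - 1*1) (0*1 - 0*1) (0*1 - 1*1)) = (2*b) * (1 * (a-b+c) * bil2 a b c (0*1 - 0*1) (0*1 - 1*1) (0*1 - 0*1) (0*1 - 1*1) + bil2 a b c ((-b)*1 - 0*(a-b+c)) (c*1 - 1*(a-b+c)) (0*1 - 0*1) (0*1 - 1*1) * (0*1 - 1*1))" unfolding bil2_def by algebra
    show ?thesis unfolding bil_2 by (rule half_eq[OF h])
  qed
  have B0F: "foot (pt A p q ((-b)/(a-b+c)) (c/(a-b+c))) (pt A p q (0/1) (1/1)) (pt A p q (0/1) (0/1)) = pt A p q (0/(2*b)) ((a+b-c)/(2*b))"
    by (rule foot_frac[OF n _ _ _ _ B0F_b2 B0F_ex B0F_ey]) (use dnz in simp)+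
  have C0F_b2: "bil a b c (1*1 - 0*1) (0*1 - 0*1) (1*1 - 0*1) (0*1 - 0*1) \<noteq> 0"
  proof -
    have h: "bil2 a b c (1*1 - 0*1) (0*1 - 0*1) (1*1 - 0*1) (0*1 - 0*1) = 2*(1*c*c)" unfolding bil2_def by algebra
    show ?thesis unfolding bil_2 h using pos nz by simp
  qed
  have C0F_ex: "(a-b+c) * (1 * (a+b-c) * bil a b c (1*1 - 0*1) (0*1 - 0*1) (1*1 - 0*1) (0*1 - 0*1)) = (2*c) * (0 * (a+b-c) * bil a b c (1*1 - 0*1) (0*1 - 0*1) (1*1 - 0*1) (0*1 - 0*1) + bil a b c (b*1 - 0*(a+b-c)) ((-c)*1 - 0*(a+b-c)) (1*1 - 0*1) (0*1 - 0*1) * (1*1 - 0*1))"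
  proof -
    have h: "(a-b+c) * (1 * (a+b-c) * bil2 a b c (1*1 - 0*1) (0*1 - 0*1) (1*1 - 0*1) (0*1 - 0*1)) = (2*c) * (0 * (a+b-c) * bil2 a b c (1*1 - 0*1) (0*1 - 0*1) (1*1 - 0*1) (0*1 - 0*1) + bil2 a b c (b*1 - 0*(a+b-c)) ((-c)*1 - 0*(a+b-c)) (1*1 - 0*1) (0*1 - 0*1) * (1*1 - 0*1))" unfolding bil2_def by algebra
    show ?thesis unfolding bil_2 by (rule half_eq[OF h])
  qed
  have C0F_ey: "0 * (1 * (a+b-c) * bil a b c (1*1 - 0*1) (0*1 - 0*1) (1*1 - 0*1) (0*1 - 0*1)) = (2*c) * (0 * (a+b-c) * bil a b c (1*1 - 0*1) (0*1 - 0*1) (1*1 - 0*1) (0*1 - 0*1) + bil a b c (b*1 - 0*(a+b-c)) ((-c)*1 - 0*(a+b-c)) (1*1 - 0*1) (0*1 - 0*1) * (0*1 - 0*1))"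
  proof -
    have h: "0 * (1 * (a+b-c) * bil2 a b c (1*1 - 0*1) (0*1 - 0*1) (1*1 - 0*1) (0*1 - 0*1)) = (2*c) * (0 * (a+b-c) * bil2 a b c (1*1 - 0*1) (0*1 - 0*1) (1*1 - 0*1) (0*1 - 0*1) + bil2 a b c (b*1 - 0*(a+b-c)) ((-c)*1 - 0*(a+b-c)) (1*1 - 0*1) (0*1 - 0*1) * (0*1 - 0*1))" unfolding bil2_def by algebra
    show ?thesis unfolding bil_2 by (rule half_eq[OF h])
  qed
  have C0F: "foot (pt A p q (b/(a+b-c)) ((-c)/(a+b-c))) (pt A p q (0/1) (0/1)) (pt A p q (1/1) (0/1)) = pt A p q ((a-b+c)/(2*c)) (0/(2*c))"
    by (rule foot_frac[OF n _ _ _ _ C0F_b2 C0F_ex C0F_ey]) (use dnz in simp)+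
  have A0: "A0 = pt A p q ((a-b+c)/(2*a)) ((a+b-c)/(2*a))" using A0F unfolding assms(4) IA ptA by simp
  have B0: "B0 = pt A p q (0/(2*b)) ((a+b-c)/(2*b))" using B0F unfolding assms(5) IB ptA by simp
  have C0: "C0 = pt A p q ((a-b+c)/(2*c)) (0/(2*c))" using C0F unfolding assms(6) IC ptA by simp
  have O0C_det: "(0*(2*a) - (a-b+c)*(2*b))*(0*(2*a) - (a+b-c)*(2*c)) - ((a+b-c)*(2*a) - (a+b-c)*(2*b))*((a-b+c)*(2*a) - (a-b+c)*(2*c)) \<noteq> 0"
  proof -
    have "(0*(2*a) - (a-b+c)*(2*b))*(0*(2*a) - (a+b-c)*(2*c)) - ((a+b-c)*(2*a) - (a+b-c)*(2*b))*((a-b+c)*(2*a) - (a-b+c)*(2*c)) = 4*a*(-a+b+c)*(a-b+c)*(a+b-c)" by algebra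
    thus ?thesis using pos nz  by simp
  qed
  have O0C_e1: "bil a b c (2*(b*(0 - a^6 + 3*a^4*b^2 - 2*a^4*b*c + a^4*c^2 - 2*a^3*b^2*c + 2*a^3*b*c^2 - 3*a^2*b^4 + 2*a^2*b^3*c - 2*a^2*b^2*c^2 + 2*a^2*b*c^3 + a^2*c^4 + 2*a*b^4*c + 2*a*b^3*c^2 - 2*a*b^2*c^3 - 2*a*b*c^4 + b^6 - 3*b^4*c^2 + 3*b^2*c^4 - c^6))*(2*a)*(2*b) - (a-b+c)*((a+b+c)*(-a+b+c)^2*(a-b+c)^2*(a+b-c)^2)*(2*b) - 0*((a+b+c)*(-a+b+c)^2*(a-b+c)^2*(a+b-c)^2)*(2*a)) (2*(c*(0 - a^6 + a^4*b^2 - 2*a^4*b*c + 3*a^4*c^2 + 2*a^3*b^2*c - 2*a^3*b*c^2 + a^2*b^4 + 2*a^2*b^3*c - 2*a^2*b^2*c^2 + 2*a^2*b*c^3 - 3*a^2*c^4 - 2*a*b^4*c - 2*a*b^3*c^2 + 2*a*b^2*c^3 + 2*a*b*c^4 - b^6 + 3*b^4*c^2 - 3*b^2*c^4 + c^6))*(2*a)*(2*b) - (a+b-c)*((a+b+c)*(-a+b+c)^2*(a-b+c)^2*(a+b-c)^2)*(2*b) - (a+b-c)*((a+b+c)*(-a+b+c)^2*(a-b+c)^2*(a+b-c)^2)*(2*a)) (0*(2*a) - (a-b+c)*(2*b)) ((a+b-c)*(2*a) - (a+b-c)*(2*b)) = 0"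
  proof -
    have h: "bil2 a b c (2*(b*(0 - a^6 + 3*a^4*b^2 - 2*a^4*b*c + a^4*c^2 - 2*a^3*b^2*c + 2*a^3*b*c^2 - 3*a^2*b^4 + 2*a^2*b^3*c - 2*a^2*b^2*c^2 + 2*a^2*b*c^3 + a^2*c^4 + 2*a*b^4*c + 2*a*b^3*c^2 - 2*a*b^2*c^3 - 2*a*b*c^4 + b^6 - 3*b^4*c^2 + 3*b^2*c^4 - c^6))*(2*a)*(2*b) - (a-b+c)*((a+b+c)*(-a+b+c)^2*(a-b+c)^2*(a+b-c)^2)*(2*b) - 0*((a+b+c)*(-a+b+c)^2*(a-b+c)^2*(a+b-c)^2)*(2*a)) (2*(c*(0 - a^6 + a^4*b^2 - 2*a^4*b*c + 3*a^4*c^2 + 2*a^3*b^2*c - 2*a^3*b*c^2 + a^2*b^4 + 2*a^2*b^3*c - 2*a^2*b^2*c^2 + 2*a^2*b*c^3 - 3*a^2*c^4 - 2*a*b^4*c - 2*a*b^3*c^2 + 2*a*b^2*c^3 + 2*a*b*c^4 - b^6 + 3*b^4*c^2 - 3*b^2*c^4 + c^6))*(2*a)*(2*b) - (a+b-c)*((a+b+c)*(-a+b+c)^2*(a-b+c)^2*(a+b-c)^2)*(2*b) - (a+b-c)*((a+b+c)*(-a+b+c)^2*(a-b+c)^2*(a+b-c)^2)*(2*a)) (0*(2*a) - (a-b+c)*(2*b)) ((a+b-c)*(2*a) - (a+b-c)*(2*b)) = 0" unfolding bil2_def by algebra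
    show ?thesis unfolding bil_2 h by simp
  qed
  have O0C_e2: "bil a b c (2*(b*(0 - a^6 + 3*a^4*b^2 - 2*a^4*b*c + a^4*c^2 - 2*a^3*b^2*c + 2*a^3*b*c^2 - 3*a^2*b^4 + 2*a^2*b^3*c - 2*a^2*b^2*c^2 + 2*a^2*b*c^3 + a^2*c^4 + 2*a*b^4*c + 2*a*b^3*c^2 - 2*a*b^2*c^3 - 2*a*b*c^4 + b^6 - 3*b^4*c^2 + 3*b^2*c^4 - c^6))*(2*b)*(2*c) - 0*((a+b+c)*(-a+b+c)^2*(a-b+c)^2*(a+b-c)^2)*(2*c) - (a-b+c)*((a+b+c)*(-a+b+c)^2*(a-b+c)^2*(a+b-c)^2)*(2*b)) (2*(c*(0 - a^6 + a^4*b^2 - 2*a^4*b*c + 3*a^4*c^2 + 2*a^3*b^2*c - 2*a^3*b*c^2 + a^2*b^4 + 2*a^2*b^3*c - 2*a^2*b^2*c^2 + 2*a^2*b*c^3 - 3*a^2*c^4 - 2*a*b^4*c - 2*a*b^3*c^2 + 2*a*b^2*c^3 + 2*a*b*c^4 - b^6 + 3*b^4*c^2 - 3*b^2*c^4 + c^6))*(2*b)*(2*c) - (a+b-c)*((a+b+c)*(-a+b+c)^2*(a-b+c)^2*(a+b-c)^2)*(2*c) - 0*((a+b+c)*(-a+b+c)^2*(a-b+c)^2*(a+b-c)^2)*(2*b)) ((a-b+c)*(2*b) - 0*(2*c)) (0*(2*b) - (a+b-c)*(2*c)) = 0"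
  proof -
    have h: "bil2 a b c (2*(b*(0 - a^6 + 3*a^4*b^2 - 2*a^4*b*c + a^4*c^2 - 2*a^3*b^2*c + 2*a^3*b*c^2 - 3*a^2*b^4 + 2*a^2*b^3*c - 2*a^2*b^2*c^2 + 2*a^2*b*c^3 + a^2*c^4 + 2*a*b^4*c + 2*a*b^3*c^2 - 2*a*b^2*c^3 - 2*a*b*c^4 + b^6 - 3*b^4*c^2 + 3*b^2*c^4 - c^6))*(2*b)*(2*c) - 0*((a+b+c)*(-a+b+c)^2*(a-b+c)^2*(a+b-c)^2)*(2*c) - (a-b+c)*((a+b+c)*(-a+b+c)^2*(a-b+c)^2*(a+b-c)^2)*(2*b)) (2*(c*(0 - a^6 + a^4*b^2 - 2*a^4*b*c + 3*a^4*c^2 + 2*a^3*b^2*c - 2*a^3*b*c^2 + a^2*b^4 + 2*a^2*b^3*c - 2*a^2*b^2*c^2 + 2*a^2*b*c^3 - 3*a^2*c^4 - 2*a*b^4*c - 2*a*b^3*c^2 + 2*a*b^2*c^3 + 2*a*b*c^4 - b^6 + 3*b^4*c^2 - 3*b^2*c^4 + c^6))*(2*b)*(2*c) - (a+b-c)*((a+b+c)*(-a+b+c)^2*(a-b+c)^2*(a+b-c)^2)*(2*c) - 0*((a+b+c)*(-a+b+c)^2*(a-b+c)^2*(a+b-c)^2)*(2*b)) ((a-b+c)*(2*b) - 0*(2*c)) (0*(2*b) - (a+b-c)*(2*c)) = 0" unfolding bil2_def by algebra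
    show ?thesis unfolding bil_2 h by simp
  qed
  have O0C: "circumcenter (pt A p q ((a-b+c)/(2*a)) ((a+b-c)/(2*a))) (pt A p q (0/(2*b)) ((a+b-c)/(2*b))) (pt A p q ((a-b+c)/(2*c)) (0/(2*c))) = pt A p q ((b*(0 - a^6 + 3*a^4*b^2 - 2*a^4*b*c + a^4*c^2 - 2*a^3*b^2*c + 2*a^3*b*c^2 - 3*a^2*b^4 + 2*a^2*b^3*c - 2*a^2*b^2*c^2 + 2*a^2*b*c^3 + a^2*c^4 + 2*a*b^4*c + 2*a*b^3*c^2 - 2*a*b^2*c^3 - 2*a*b*c^4 + b^6 - 3*b^4*c^2 + 3*b^2*c^4 - c^6))/((a+b+c)*(-a+b+c)^2*(a-b+c)^2*(a+b-c)^2)) ((c*(0 - a^6 + a^4*b^2 - 2*a^4*b*c + 3*a^4*c^2 + 2*a^3*b^2*c - 2*a^3*b*c^2 + a^2*b^4 + 2*a^2*b^3*c - 2*a^2*b^2*c^2 + 2*a^2*b*c^3 - 3*a^2*c^4 - 2*a*b^4*c - 2*a*b^3*c^2 + 2*a*b^2*c^3 + 2*a*b*c^4 - b^6 + 3*b^4*c^2 - 3*b^2*c^4 + c^6))/((a+b+c)*(-a+b+c)^2*(a-b+c)^2*(a+b-c)^2))"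
    by (rule circ_frac[OF n D _ _ _ _ O0C_det O0C_e1 O0C_e2]) (use dnz in simp)+
  have O0: "O0 = pt A p q ((b*(0 - a^6 + 3*a^4*b^2 - 2*a^4*b*c + a^4*c^2 - 2*a^3*b^2*c + 2*a^3*b*c^2 - 3*a^2*b^4 + 2*a^2*b^3*c - 2*a^2*b^2*c^2 + 2*a^2*b*c^3 + a^2*c^4 + 2*a*b^4*c + 2*a*b^3*c^2 - 2*a*b^2*c^3 - 2*a*b*c^4 + b^6 - 3*b^4*c^2 + 3*b^2*c^4 - c^6))/((a+b+c)*(-a+b+c)^2*(a-b+c)^2*(a+b-c)^2)) ((c*(0 - a^6 + a^4*b^2 - 2*a^4*b*c + 3*a^4*c^2 + 2*a^3*b^2*c - 2*a^3*b*c^2 + a^2*b^4 + 2*a^2*b^3*c - 2*a^2*b^2*c^2 + 2*a^2*b*c^3 - 3*a^2*c^4 - 2*a*b^4*c - 2*a*b^3*c^2 + 2*a*b^2*c^3 + 2*a*b*c^4 - b^6 + 3*b^4*c^2 - 3*b^2*c^4 + c^6))/((a+b+c)*(-a+b+c)^2*(a-b+c)^2*(a+b-c)^2))" using O0C unfolding assms(7) A0 B0 C0 by simp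
  have ApF_b2: "bil a b c (b*1 - 0*(a+b+c)) (c*1 - 0*(a+b+c)) (b*1 - 0*(a+b+c)) (c*1 - 0*(a+b+c)) \<noteq> 0"
  proof -
    have h: "bil2 a b c (b*1 - 0*(a+b+c)) (c*1 - 0*(a+b+c)) (b*1 - 0*(a+b+c)) (c*1 - 0*(a+b+c)) = 2*(1*b*c*(a+b+c)*(-a+b+c))" unfolding bil2_def by algebra
    show ?thesis unfolding bil_2 h using pos nz by simp
  qed
  have ApF_ex: "(a*b) * (1 * ((a+b+c)*(-a+b+c)*(a-b+c)*(a+b-c)) * bil a b c (b*1 - 0*(a+b+c)) (c*1 - 0*(a+b+c)) (b*1 - 0*(a+b+c)) (c*1 - 0*(a+b+c))) = ((a+b+c)*(-a+b+c)) * (0 * ((a+b+c)*(-a+b+c)*(a-b+c)*(a+b-c)) * bil a b c (b*1 - 0*(a+b+c)) (c*1 - 0*(a+b+c)) (b*1 - 0*(a+b+c)) (c*1 - 0*(a+b+c)) + bil a b c ((b*(a^3 + a^2*b - a^2*c - a*b^2 + 2*a*b*c - a*c^2 - b^3 - b^2*c + b*c^2 + c^3))*1 - 0*((a+b+c)*(-a+b+c)*(a-b+c)*(a+b-c))) ((c*(a^3 - a^2*b + a^2*c - a*b^2 + 2*a*b*c - a*c^2 + b^3 + b^2*c - b*c^2 - c^3))*1 - 0*((a+b+c)*(-a+b+c)*(a-b+c)*(a+b-c))) (b*1 - 0*(a+b+c)) (c*1 - 0*(a+b+c)) * (b*1 - 0*(a+b+c)))"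
  proof -
    have h: "(a*b) * (1 * ((a+b+c)*(-a+b+c)*(a-b+c)*(a+b-c)) * bil2 a b c (b*1 - 0*(a+b+c)) (c*1 - 0*(a+b+c)) (b*1 - 0*(a+b+c)) (c*1 - 0*(a+b+c))) = ((a+b+c)*(-a+b+c)) * (0 * ((a+b+c)*(-a+b+c)*(a-b+c)*(a+b-c)) * bil2 a b c (b*1 - 0*(a+b+c)) (c*1 - 0*(a+b+c)) (b*1 - 0*(a+b+c)) (c*1 - 0*(a+b+c)) + bil2 a b c ((b*(a^3 + a^2*b - a^2*c - a*b^2 + 2*a*b*c - a*c^2 - b^3 - b^2*c + b*c^2 + c^3))*1 - 0*((a+b+c)*(-a+b+c)*(a-b+c)*(a+b-c))) ((c*(a^3 - a^2*b + a^2*c - a*b^2 + 2*a*b*c - a*c^2 + b^3 + b^2*c - b*c^2 - c^3))*1 - 0*((a+b+c)*(-a+b+c)*(a-b+c)*(a+b-c))) (b*1 - 0*(a+b+c)) (c*1 - 0*(a+b+c)) * (b*1 - 0*(a+b+c)))" unfolding bil2_def by algebra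
    show ?thesis unfolding bil_2 by (rule half_eq[OF h])
  qed
  have ApF_ey: "(a*c) * (1 * ((a+b+c)*(-a+b+c)*(a-b+c)*(a+b-c)) * bil a b c (b*1 - 0*(a+b+c)) (c*1 - 0*(a+b+c)) (b*1 - 0*(a+b+c)) (c*1 - 0*(a+b+c))) = ((a+b+c)*(-a+b+c)) * (0 * ((a+b+c)*(-a+b+c)*(a-b+c)*(a+b-c)) * bil a b c (b*1 - 0*(a+b+c)) (c*1 - 0*(a+b+c)) (b*1 - 0*(a+b+c)) (c*1 - 0*(a+b+c)) + bil a b c ((b*(a^3 + a^2*b - a^2*c - a*b^2 + 2*a*b*c - a*c^2 - b^3 - b^2*c + b*c^2 + c^3))*1 - 0*((a+b+c)*(-a+b+c)*(a-b+c)*(a+b-c))) ((c*(a^3 - a^2*b + a^2*c - a*b^2 + 2*a*b*c - a*c^2 + b^3 + b^2*c - b*c^2 - c^3))*1 - 0*((a+b+c)*(-a+b+c)*(a-b+c)*(a+b-c))) (b*1 - 0*(a+b+c)) (c*1 - 0*(a+b+c)) * (c*1 - 0*(a+b+c)))"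
  proof -
    have h: "(a*c) * (1 * ((a+b+c)*(-a+b+c)*(a-b+c)*(a+b-c)) * bil2 a b c (b*1 - 0*(a+b+c)) (c*1 - 0*(a+b+c)) (b*1 - 0*(a+b+c)) (c*1 - 0*(a+b+c))) = ((a+b+c)*(-a+b+c)) * (0 * ((a+b+c)*(-a+b+c)*(a-b+c)*(a+b-c)) * bil2 a b c (b*1 - 0*(a+b+c)) (c*1 - 0*(a+b+c)) (b*1 - 0*(a+b+c)) (c*1 - 0*(a+b+c)) + bil2 a b c ((b*(a^3 + a^2*b - a^2*c - a*b^2 + 2*a*b*c - a*c^2 - b^3 - b^2*c + b*c^2 + c^3))*1 - 0*((a+b+c)*(-a+b+c)*(a-b+c)*(a+b-c))) ((c*(a^3 - a^2*b + a^2*c - a*b^2 + 2*a*b*c - a*c^2 + b^3 + b^2*c - b*c^2 - c^3))*1 - 0*((a+b+c)*(-a+b+c)*(a-b+c)*(a+b-c))) (b*1 - 0*(a+b+c)) (c*1 - 0*(a+b+c)) * (c*1 - 0*(a+b+c)))" unfolding bil2_def by algebra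
    show ?thesis unfolding bil_2 by (rule half_eq[OF h])
  qed
  have ApF: "foot (pt A p q ((b*(a^3 + a^2*b - a^2*c - a*b^2 + 2*a*b*c - a*c^2 - b^3 - b^2*c + b*c^2 + c^3))/((a+b+c)*(-a+b+c)*(a-b+c)*(a+b-c))) ((c*(a^3 - a^2*b + a^2*c - a*b^2 + 2*a*b*c - a*c^2 + b^3 + b^2*c - b*c^2 - c^3))/((a+b+c)*(-a+b+c)*(a-b+c)*(a+b-c)))) (pt A p q (0/1) (0/1)) (pt A p q (b/(a+b+c)) (c/(a+b+c))) = pt A p q ((a*b)/((a+b+c)*(-a+b+c))) ((a*c)/((a+b+c)*(-a+b+c)))"
    by (rule foot_frac[OF n _ _ _ _ ApF_b2 ApF_ex ApF_ey]) (use dnz in simp)+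
  have BpF_b2: "bil a b c (b*1 - 1*(a+b+c)) (c*1 - 0*(a+b+c)) (b*1 - 1*(a+b+c)) (c*1 - 0*(a+b+c)) \<noteq> 0"
  proof -
    have h: "bil2 a b c (b*1 - 1*(a+b+c)) (c*1 - 0*(a+b+c)) (b*1 - 1*(a+b+c)) (c*1 - 0*(a+b+c)) = 2*(1*a*c*(a+b+c)*(a-b+c))" unfolding bil2_def by algebra
    show ?thesis unfolding bil_2 h using pos nz by simp
  qed
  have BpF_ex: "(a^2-a*b+2*a*c-b^2-b*c+c^2) * (1 * ((a+b+c)*(-a+b+c)*(a-b+c)*(a+b-c)) * bil a b c (b*1 - 1*(a+b+c)) (c*1 - 0*(a+b+c)) (b*1 - 1*(a+b+c)) (c*1 - 0*(a+b+c))) = ((a+b+c)*(a-b+c)) * (1 * ((a+b+c)*(-a+b+c)*(a-b+c)*(a+b-c)) * bil a b c (b*1 - 1*(a+b+c)) (c*1 - 0*(a+b+c)) (b*1 - 1*(a+b+c)) (c*1 - 0*(a+b+c)) + bil a b c ((b*(a^3 + a^2*b - a^2*c - a*b^2 + 2*a*b*c - a*c^2 - b^3 - b^2*c + b*c^2 + c^3))*1 - 1*((a+b+c)*(-a+b+c)*(a-b+c)*(a+b-c))) ((c*(a^3 - a^2*b + a^2*c - a*b^2 + 2*a*b*c - a*c^2 + b^3 + b^2*c - b*c^2 - c^3))*1 - 0*((a+b+c)*(-a+b+c)*(a-b+c)*(a+b-c))) (b*1 - 1*(a+b+c)) (c*1 - 0*(a+b+c)) * (b*1 - 1*(a+b+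c)))"
  proof -
    have h: "(a^2-a*b+2*a*c-b^2-b*c+c^2) * (1 * ((a+b+c)*(-a+b+c)*(a-b+c)*(a+b-c)) * bil2 a b c (b*1 - 1*(a+b+c)) (c*1 - 0*(a+b+c)) (b*1 - 1*(a+b+c)) (c*1 - 0*(a+b+c))) = ((a+b+c)*(a-b+c)) * (1 * ((a+b+c)*(-a+b+c)*(a-b+c)*(a+b-c)) * bil2 a b c (b*1 - 1*(a+b+c)) (c*1 - 0*(a+b+c)) (b*1 - 1*(a+b+c)) (c*1 - 0*(a+b+c)) + bil2 a b c ((b*(a^3 + a^2*b - a^2*c - a*b^2 + 2*a*b*c - a*c^2 - b^3 - b^2*c + b*c^2 + c^3))*1 - 1*((a+b+c)*(-a+b+c)*(a-b+c)*(a+b-c))) ((c*(a^3 - a^2*b + a^2*c - a*b^2 + 2*a*b*c - a*c^2 + b^3 + b^2*c - b*c^2 - c^3))*1 - 0*((a+b+c)*(-a+b+c)*(a-b+c)*(a+b-c))) (b*1 - 1*(a+b+c)) (c*1 - 0*(a+b+c)) * (b*1 - 1*(a+b+c)))" unfolding bil2_def by algebra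
    show ?thesis unfolding bil_2 by (rule half_eq[OF h])
  qed
  have BpF_ey: "(b*c) * (1 * ((a+b+c)*(-a+b+c)*(a-b+c)*(a+b-c)) * bil a b c (b*1 - 1*(a+b+c)) (c*1 - 0*(a+b+c)) (b*1 - 1*(a+b+c)) (c*1 - 0*(a+b+c))) = ((a+b+c)*(a-b+c)) * (0 * ((a+b+c)*(-a+b+c)*(a-b+c)*(a+b-c)) * bil a b c (b*1 - 1*(a+b+c)) (c*1 - 0*(a+b+c)) (b*1 - 1*(a+b+c)) (c*1 - 0*(a+b+c)) + bil a b c ((b*(a^3 + a^2*b - a^2*c - a*b^2 + 2*a*b*c - a*c^2 - b^3 - b^2*c + b*c^2 + c^3))*1 - 1*((a+b+c)*(-a+b+c)*(a-b+c)*(a+b-c))) ((c*(a^3 - a^2*b + a^2*c - a*b^2 + 2*a*b*c - a*c^2 + b^3 + b^2*c - b*c^2 - c^3))*1 - 0*((a+b+c)*(-a+b+c)*(a-b+c)*(a+b-c))) (b*1 - 1*(a+b+c)) (c*1 - 0*(a+b+c)) * (c*1 - 0*(a+b+c)))"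
  proof -
    have h: "(b*c) * (1 * ((a+b+c)*(-a+b+c)*(a-b+c)*(a+b-c)) * bil2 a b c (b*1 - 1*(a+b+c)) (c*1 - 0*(a+b+c)) (b*1 - 1*(a+b+c)) (c*1 - 0*(a+b+c))) = ((a+b+c)*(a-b+c)) * (0 * ((a+b+c)*(-a+b+c)*(a-b+c)*(a+b-c)) * bil2 a b c (b*1 - 1*(a+b+c)) (c*1 - 0*(a+b+c)) (b*1 - 1*(a+b+c)) (c*1 - 0*(a+b+c)) + bil2 a b c ((b*(a^3 + a^2*b - a^2*c - a*b^2 + 2*a*b*c - a*c^2 - b^3 - b^2*c + b*c^2 + c^3))*1 - 1*((a+b+c)*(-a+b+c)*(a-b+c)*(a+b-c))) ((c*(a^3 - a^2*b + a^2*c - a*b^2 + 2*a*b*c - a*c^2 + b^3 + b^2*c - b*c^2 - c^3))*1 - 0*((a+b+c)*(-a+b+c)*(a-b+c)*(a+b-c))) (b*1 - 1*(a+b+c)) (c*1 - 0*(a+b+c)) * (c*1 - 0*(a+b+c)))" unfolding bil2_def by algebra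
    show ?thesis unfolding bil_2 by (rule half_eq[OF h])
  qed
  have BpF: "foot (pt A p q ((b*(a^3 + a^2*b - a^2*c - a*b^2 + 2*a*b*c - a*c^2 - b^3 - b^2*c + b*c^2 + c^3))/((a+b+c)*(-a+b+c)*(a-b+c)*(a+b-c))) ((c*(a^3 - a^2*b + a^2*c - a*b^2 + 2*a*b*c - a*c^2 + b^3 + b^2*c - b*c^2 - c^3))/((a+b+c)*(-a+b+c)*(a-b+c)*(a+b-c)))) (pt A p q (1/1) (0/1)) (pt A p q (b/(a+b+c)) (c/(a+b+c))) = pt A p q ((a^2-a*b+2*a*c-b^2-b*c+c^2)/((a+b+c)*(a-b+c))) ((b*c)/((a+b+c)*(a-b+c)))"
    by (rule foot_frac[OF n _ _ _ _ BpF_b2 BpF_ex BpF_ey]) (use dnz in simp)+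
  have CpF_b2: "bil a b c (b*1 - 0*(a+b+c)) (c*1 - 1*(a+b+c)) (b*1 - 0*(a+b+c)) (c*1 - 1*(a+b+c)) \<noteq> 0"
  proof -
    have h: "bil2 a b c (b*1 - 0*(a+b+c)) (c*1 - 1*(a+b+c)) (b*1 - 0*(a+b+c)) (c*1 - 1*(a+b+c)) = 2*(1*a*b*(a+b+c)*(a+b-c))" unfolding bil2_def by algebra
    show ?thesis unfolding bil_2 h using pos nz by simp
  qed
  have CpF_ex: "(b*c) * (1 * ((a+b+c)*(-a+b+c)*(a-b+c)*(a+b-c)) * bil a b c (b*1 - 0*(a+b+c)) (c*1 - 1*(a+b+c)) (b*1 - 0*(a+b+c)) (c*1 - 1*(a+b+c))) = ((a+b+c)*(a+b-c)) * (0 * ((a+b+c)*(-a+b+c)*(a-b+c)*(a+b-c)) * bil a b c (b*1 - 0*(a+b+c)) (c*1 - 1*(a+b+c)) (b*1 - 0*(a+b+c)) (c*1 - 1*(a+b+c)) + bil a b c ((b*(a^3 + a^2*b - a^2*c - a*b^2 + 2*a*b*c - a*c^2 - b^3 - b^2*c + b*c^2 + c^3))*1 - 0*((a+b+c)*(-a+b+c)*(a-b+c)*(a+b-c))) ((c*(a^3 - a^2*b + a^2*c - a*b^2 + 2*a*b*c - a*c^2 + b^3 + b^2*c - b*c^2 - c^3))*1 - 1*((a+b+c)*(-a+b+c)*(a-b+c)*(a+b-c))) (b*1 - 0*(a+b+c)) (c*1 - 1*(a+b+c)) * (b*1 - 0*(a+b+c)))"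
  proof -
    have h: "(b*c) * (1 * ((a+b+c)*(-a+b+c)*(a-b+c)*(a+b-c)) * bil2 a b c (b*1 - 0*(a+b+c)) (c*1 - 1*(a+b+c)) (b*1 - 0*(a+b+c)) (c*1 - 1*(a+b+c))) = ((a+b+c)*(a+b-c)) * (0 * ((a+b+c)*(-a+b+c)*(a-b+c)*(a+b-c)) * bil2 a b c (b*1 - 0*(a+b+c)) (c*1 - 1*(a+b+c)) (b*1 - 0*(a+b+c)) (c*1 - 1*(a+b+c)) + bil2 a b c ((b*(a^3 + a^2*b - a^2*c - a*b^2 + 2*a*b*c - a*c^2 - b^3 - b^2*c + b*c^2 + c^3))*1 - 0*((a+b+c)*(-a+b+c)*(a-b+c)*(a+b-c))) ((c*(a^3 - a^2*b + a^2*c - a*b^2 + 2*a*b*c - a*c^2 + b^3 + b^2*c - b*c^2 - c^3))*1 - 1*((a+b+c)*(-a+b+c)*(a-b+c)*(a+b-c))) (b*1 - 0*(a+b+c)) (c*1 - 1*(a+b+c)) * (b*1 - 0*(a+b+c)))" unfolding bil2_def by algebra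
    show ?thesis unfolding bil_2 by (rule half_eq[OF h])
  qed
  have CpF_ey: "(a^2+2*a*b-a*c+b^2-b*c-c^2) * (1 * ((a+b+c)*(-a+b+c)*(a-b+c)*(a+b-c)) * bil a b c (b*1 - 0*(a+b+c)) (c*1 - 1*(a+b+c)) (b*1 - 0*(a+b+c)) (c*1 - 1*(a+b+c))) = ((a+b+c)*(a+b-c)) * (1 * ((a+b+c)*(-a+b+c)*(a-b+c)*(a+b-c)) * bil a b c (b*1 - 0*(a+b+c)) (c*1 - 1*(a+b+c)) (b*1 - 0*(a+b+c)) (c*1 - 1*(a+b+c)) + bil a b c ((b*(a^3 + a^2*b - a^2*c - a*b^2 + 2*a*b*c - a*c^2 - b^3 - b^2*c + b*c^2 + c^3))*1 - 0*((a+b+c)*(-a+b+c)*(a-b+c)*(a+b-c))) ((c*(a^3 - a^2*b + a^2*c - a*b^2 + 2*a*b*c - a*c^2 + b^3 + b^2*c - b*c^2 - c^3))*1 - 1*((a+b+c)*(-a+b+c)*(a-b+c)*(a+b-c))) (b*1 - 0*(a+b+c)) (c*1 - 1*(a+b+c)) * (c*1 - 1*(a+b+c)))"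
  proof -
    have h: "(a^2+2*a*b-a*c+b^2-b*c-c^2) * (1 * ((a+b+c)*(-a+b+c)*(a-b+c)*(a+b-c)) * bil2 a b c (b*1 - 0*(a+b+c)) (c*1 - 1*(a+b+c)) (b*1 - 0*(a+b+c)) (c*1 - 1*(a+b+c))) = ((a+b+c)*(a+b-c)) * (1 * ((a+b+c)*(-a+b+c)*(a-b+c)*(a+b-c)) * bil2 a b c (b*1 - 0*(a+b+c)) (c*1 - 1*(a+b+c)) (b*1 - 0*(a+b+c)) (c*1 - 1*(a+b+c)) + bil2 a b c ((b*(a^3 + a^2*b - a^2*c - a*b^2 + 2*a*b*c - a*c^2 - b^3 - b^2*c + b*c^2 + c^3))*1 - 0*((a+b+c)*(-a+b+c)*(a-b+c)*(a+b-c))) ((c*(a^3 - a^2*b + a^2*c - a*b^2 + 2*a*b*c - a*c^2 + b^3 + b^2*c - b*c^2 - c^3))*1 - 1*((a+b+c)*(-a+b+c)*(a-b+c)*(a+b-c))) (b*1 - 0*(a+b+c)) (c*1 - 1*(a+b+c)) * (c*1 - 1*(a+b+c)))" unfolding bil2_def by algebra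
    show ?thesis unfolding bil_2 by (rule half_eq[OF h])
  qed
  have CpF: "foot (pt A p q ((b*(a^3 + a^2*b - a^2*c - a*b^2 + 2*a*b*c - a*c^2 - b^3 - b^2*c + b*c^2 + c^3))/((a+b+c)*(-a+b+c)*(a-b+c)*(a+b-c))) ((c*(a^3 - a^2*b + a^2*c - a*b^2 + 2*a*b*c - a*c^2 + b^3 + b^2*c - b*c^2 - c^3))/((a+b+c)*(-a+b+c)*(a-b+c)*(a+b-c)))) (pt A p q (0/1) (1/1)) (pt A p q (b/(a+b+c)) (c/(a+b+c))) = pt A p q ((b*c)/((a+b+c)*(a+b-c))) ((a^2+2*a*b-a*c+b^2-b*c-c^2)/((a+b+c)*(a+b-c)))"
    by (rule foot_frac[OF n _ _ _ _ CpF_b2 CpF_ex CpF_ey]) (use dnz in simp)+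
  have Ap: "A' = pt A p q ((a*b)/((a+b+c)*(-a+b+c))) ((a*c)/((a+b+c)*(-a+b+c)))" using ApF unfolding assms(8) Be I ptA by simp
  have Bp: "B' = pt A p q ((a^2-a*b+2*a*c-b^2-b*c+c^2)/((a+b+c)*(a-b+c))) ((b*c)/((a+b+c)*(a-b+c)))" using BpF unfolding assms(9) Be I ptA by simp
  have Cp: "C' = pt A p q ((b*c)/((a+b+c)*(a+b-c))) ((a^2+2*a*b-a*c+b^2-b*c-c^2)/((a+b+c)*(a+b-c)))" using CpF unfolding assms(10) Be I ptA by simp
  show ?thesis
  proof (cases "a = b \<and> b = c")
    case True
    hence e: "b = a" "c = a" by simp_all
    have x: "(b*(a^3 + a^2*b - a^2*c - a*b^2 + 2*a*b*c - a*c^2 - b^3 - b^2*c + b*c^2 + c^3))/((a+b+c)*(-a+b+c)*(a-b+c)*(a+b-c)) = (b*(0 - a^6 + 3*a^4*b^2 - 2*a^4*b*c + a^4*c^2 - 2*a^3*b^2*c + 2*a^3*b*c^2 - 3*a^2*b^4 + 2*a^2*b^3*c - 2*a^2*b^2*c^2 + 2*a^2*b*c^3 + a^2*c^4 + 2*a*b^4*c + 2*a*b^3*c^2 - 2*a*b^2*c^3 - 2*a*b*c^4 + b^6 - 3*b^4*c^2 + 3*b^2*c^4 - c^6))/((a+b+c)*(-a+b+c)^2*(a-b+c)^2*(a+b-c)^2)"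
    proof -
      have "(b*(a^3 + a^2*b - a^2*c - a*b^2 + 2*a*b*c - a*c^2 - b^3 - b^2*c + b*c^2 + c^3)) * ((a+b+c)*(-a+b+c)^2*(a-b+c)^2*(a+b-c)^2) = (b*(0 - a^6 + 3*a^4*b^2 - 2*a^4*b*c + a^4*c^2 - 2*a^3*b^2*c + 2*a^3*b*c^2 - 3*a^2*b^4 + 2*a^2*b^3*c - 2*a^2*b^2*c^2 + 2*a^2*b*c^3 + a^2*c^4 + 2*a*b^4*c + 2*a*b^3*c^2 - 2*a*b^2*c^3 - 2*a*b*c^4 + b^6 - 3*b^4*c^2 + 3*b^2*c^4 - c^6)) * ((a+b+c)*(-a+b+c)*(a-b+c)*(a+b-c))" unfolding e by algebra
      thus ?thesis using dnz by (simp add: frac_eq_eq)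
    qed
    have y: "(c*(a^3 - a^2*b + a^2*c - a*b^2 + 2*a*b*c - a*c^2 + b^3 + b^2*c - b*c^2 - c^3))/((a+b+c)*(-a+b+c)*(a-b+c)*(a+b-c)) = (c*(0 - a^6 + a^4*b^2 - 2*a^4*b*c + 3*a^4*c^2 + 2*a^3*b^2*c - 2*a^3*b*c^2 + a^2*b^4 + 2*a^2*b^3*c - 2*a^2*b^2*c^2 + 2*a^2*b*c^3 - 3*a^2*c^4 - 2*a*b^4*c - 2*a*b^3*c^2 + 2*a*b^2*c^3 + 2*a*b*c^4 - b^6 + 3*b^4*c^2 - 3*b^2*c^4 + c^6))/((a+b+c)*(-a+b+c)^2*(a-b+c)^2*(a+b-c)^2)"
    proof -
      have "(c*(a^3 - a^2*b + a^2*c - a*b^2 + 2*a*b*c - a*c^2 + b^3 + b^2*c - b*c^2 - c^3)) * ((a+b+c)*(-a+b+c)^2*(a-b+c)^2*(a+b-c)^2) = (c*(0 - a^6 + a^4*b^2 - 2*a^4*b*c + 3*a^4*c^2 + 2*a^3*b^2*c - 2*a^3*b*c^2 + a^2*b^4 + 2*a^2*b^3*c - 2*a^2*b^2*c^2 + 2*a^2*b*c^3 - 3*a^2*c^4 - 2*a*b^4*c - 2*a*b^3*c^2 + 2*a*b^2*c^3 + 2*a*b*c^4 - b^6 + 3*b^4*c^2 - 3*b^2*c^4 + c^6)) * ((a+b+c)*(-a+b+c)*(a-b+c)*(a+b-c))" unfolding e by algebra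
      thus ?thesis using dnz by (simp add: frac_eq_eq)
    qed
    have "Be = O0" unfolding Be O0 x y ..
    hence "{Be, H', O0} = {Be, H'}" by auto
    thus ?thesis by simp
  next
    case False
    have gnz: "(a^3 - a^2*b - a^2*c - a*b^2 + 3*a*b*c - a*c^2 + b^3 - b^2*c - b*c^2 + c^3) \<noteq> 0" using schur[OF pos] False by simp
  have HO_det: "((a^2-a*b+2*a*c-b^2-b*c+c^2)*((a+b+c)*(-a+b+c)) - (a*b)*((a+b+c)*(a-b+c)))*((a^2+2*a*b-a*c+b^2-b*c-c^2)*((a+b+c)*(-a+b+c)) - (a*c)*((a+b+c)*(a+b-c))) - ((b*c)*((a+b+c)*(-a+b+c)) - (a*c)*((a+b+c)*(a-b+c)))*((b*c)*((a+b+c)*(-a+b+c)) - (a*b)*((a+b+c)*(a+b-c))) \<noteq> 0"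
  proof -
    have "((a^2-a*b+2*a*c-b^2-b*c+c^2)*((a+b+c)*(-a+b+c)) - (a*b)*((a+b+c)*(a-b+c)))*((a^2+2*a*b-a*c+b^2-b*c-c^2)*((a+b+c)*(-a+b+c)) - (a*c)*((a+b+c)*(a+b-c))) - ((b*c)*((a+b+c)*(-a+b+c)) - (a*c)*((a+b+c)*(a-b+c)))*((b*c)*((a+b+c)*(-a+b+c)) - (a*b)*((a+b+c)*(a+b-c))) = - (1*(a+b+c)*(a+b+c)*(a+b+c)*(a+b+c)*(-a+b+c)*(a^3 - a^2*b - a^2*c - a*b^2 + 3*a*b*c - a*c^2 + b^3 - b^2*c - b*c^2 + c^3))" by algebra
    thus ?thesis using pos nz gnz by simp
  qed
  have HO_o1: "bil a b c ((a-b+c)*((a+b+c)*(-a+b+c)) - (a*b)*(a+b+c)) ((a+b-c)*((a+b+c)*(-a+b+c)) - (a*c)*(a+b+c)) ((a^2-a*b+2*a*c-b^2-b*c+c^2)*((a+b+c)*(a+b-c)) - (b*c)*((a+b+c)*(a-b+c))) ((b*c)*((a+b+c)*(a+b-c)) - (a^2+2*a*b-a*c+b^2-b*c-c^2)*((a+b+c)*(a-b+c))) = 0"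
  proof -
    have h: "bil2 a b c ((a-b+c)*((a+b+c)*(-a+b+c)) - (a*b)*(a+b+c)) ((a+b-c)*((a+b+c)*(-a+b+c)) - (a*c)*(a+b+c)) ((a^2-a*b+2*a*c-b^2-b*c+c^2)*((a+b+c)*(a+b-c)) - (b*c)*((a+b+c)*(a-b+c))) ((b*c)*((a+b+c)*(a+b-c)) - (a^2+2*a*b-a*c+b^2-b*c-c^2)*((a+b+c)*(a-b+c))) = 0" unfolding bil2_def by algebra
    show ?thesis unfolding bil_2 h by simp
  qed
  have HO_o2: "bil a b c ((a-b+c)*((a+b+c)*(a-b+c)) - (a^2-a*b+2*a*c-b^2-b*c+c^2)*(a+b+c)) ((a+b-c)*((a+b+c)*(a-b+c)) - (b*c)*(a+b+c)) ((a*b)*((a+b+c)*(a+b-c)) - (b*c)*((a+b+c)*(-a+b+c))) ((a*c)*((a+b+c)*(a+b-c)) - (a^2+2*a*b-a*c+b^2-b*c-c^2)*((a+b+c)*(-a+b+c))) = 0"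
  proof -
    have h: "bil2 a b c ((a-b+c)*((a+b+c)*(a-b+c)) - (a^2-a*b+2*a*c-b^2-b*c+c^2)*(a+b+c)) ((a+b-c)*((a+b+c)*(a-b+c)) - (b*c)*(a+b+c)) ((a*b)*((a+b+c)*(a+b-c)) - (b*c)*((a+b+c)*(-a+b+c))) ((a*c)*((a+b+c)*(a+b-c)) - (a^2+2*a*b-a*c+b^2-b*c-c^2)*((a+b+c)*(-a+b+c))) = 0" unfolding bil2_def by algebra
    show ?thesis unfolding bil_2 h by simp
  qed
  have HO_o3: "bil a b c ((a-b+c)*((a+b+c)*(a+b-c)) - (b*c)*(a+b+c)) ((a+b-c)*((a+b+c)*(a+b-c)) - (a^2+2*a*b-a*c+b^2-b*c-c^2)*(a+b+c)) ((a*b)*((a+b+c)*(a-b+c)) - (a^2-a*b+2*a*c-b^2-b*c+c^2)*((a+b+c)*(-a+b+c))) ((a*c)*((a+b+c)*(a-b+c)) - (b*c)*((a+b+c)*(-a+b+c))) = 0"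
  proof -
    have h: "bil2 a b c ((a-b+c)*((a+b+c)*(a+b-c)) - (b*c)*(a+b+c)) ((a+b-c)*((a+b+c)*(a+b-c)) - (a^2+2*a*b-a*c+b^2-b*c-c^2)*(a+b+c)) ((a*b)*((a+b+c)*(a-b+c)) - (a^2-a*b+2*a*c-b^2-b*c+c^2)*((a+b+c)*(-a+b+c))) ((a*c)*((a+b+c)*(a-b+c)) - (b*c)*((a+b+c)*(-a+b+c))) = 0" unfolding bil2_def by algebra
    show ?thesis unfolding bil_2 h by simp
  qed
  have HO: "orthocenter (pt A p q ((a*b)/((a+b+c)*(-a+b+c))) ((a*c)/((a+b+c)*(-a+b+c)))) (pt A p q ((a^2-a*b+2*a*c-b^2-b*c+c^2)/((a+b+c)*(a-b+c))) ((b*c)/((a+b+c)*(a-b+c)))) (pt A p q ((b*c)/((a+b+c)*(a+b-c))) ((a^2+2*a*b-a*c+b^2-b*c-c^2)/((a+b+c)*(a+b-c)))) = pt A p q ((a-b+c)/(a+b+c)) ((a+b-c)/(a+b+c))"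
    by (rule orth_frac[OF n D _ _ _ _ HO_det HO_o1 HO_o2 HO_o3]) (use dnz in simp)+
    have H: "H' = pt A p q ((a-b+c)/(a+b+c)) ((a+b-c)/(a+b+c))" using HO unfolding assms(11) Ap Bp Cp by simp
    have fin: "((a-b+c)*((a+b+c)*(-a+b+c)*(a-b+c)*(a+b-c)) - (b*(a^3 + a^2*b - a^2*c - a*b^2 + 2*a*b*c - a*c^2 - b^3 - b^2*c + b*c^2 + c^3))*(a+b+c))*((c*(0 - a^6 + a^4*b^2 - 2*a^4*b*c + 3*a^4*c^2 + 2*a^3*b^2*c - 2*a^3*b*c^2 + a^2*b^4 + 2*a^2*b^3*c - 2*a^2*b^2*c^2 + 2*a^2*b*c^3 - 3*a^2*c^4 - 2*a*b^4*c - 2*a*b^3*c^2 + 2*a*b^2*c^3 + 2*a*b*c^4 - b^6 + 3*b^4*c^2 - 3*b^2*c^4 + c^6))*((a+b+c)*(-a+b+c)*(a-b+c)*(a+b-c)) - (c*(a^3 - a^2*b + a^2*c - a*b^2 + 2*a*b*c - a*c^2 + b^3 + b^2*c - b*c^2 - c^3))*((a+b+c)*(-a+b+c)^2*(a-b+c)^2*(a+b-c)^2)) - ((a+b-c)*((a+b+c)*(-a+b+c)*(a-b+c)*(a+b-c)) - (c*(a^3 - a^2*b + a^2*c - a*b^2 + 2*a*b*c - a*c^2 + b^3 + b^2*c - b*c^2 - c^3))*(a+b+c))*((b*(0 - a^6 + 3*a^4*b^2 - 2*a^4*b*c + a^4*c^2 - 2*a^3*b^2*c + 2*a^3*b*c^2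 - 3*a^2*b^4 + 2*a^2*b^3*c - 2*a^2*b^2*c^2 + 2*a^2*b*c^3 + a^2*c^4 + 2*a*b^4*c + 2*a*b^3*c^2 - 2*a*b^2*c^3 - 2*a*b*c^4 + b^6 - 3*b^4*c^2 + 3*b^2*c^4 - c^6))*((a+b+c)*(-a+b+c)*(a-b+c)*(a+b-c)) - (b*(a^3 + a^2*b - a^2*c - a*b^2 + 2*a*b*c - a*c^2 - b^3 - b^2*c + b*c^2 + c^3))*((a+b+c)*(-a+b+c)^2*(a-b+c)^2*(a+b-c)^2)) = 0" by algebra
    show ?thesis unfolding Be H O0 by (rule col_frac[OF _ _ _ fin]) (use dnz in simp)+
  qed
qed

end
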